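(* For parameters $0<\varepsilon<a_1<1$ (with $\varepsilon<1/4$), let $F=F_{a_1,\varepsilon}\subset[0,1]^2$ be the attractor of the three maps $f_i(x)=A_ix+t_i$ with \[ A_1=A_3=\mathrm{diag}(a_1-\varepsilon,\tfrac14-\varepsilon),\ t_1=(1-a_1+\varepsilon,0),\ t_3=(1-a_1+\varepsilon,\tfrac34+\varepsilon),\qquad A_2=\mathrm{diag}(1-a_1,\tfrac12),\ t_2=(0,\tfrac14), \] so that $f_1([0,1]^2)=[1-a_1+\varepsilon,1]\times[0,\tfrac14-\varepsilon]$, $f_2([0,1]^2)=[0,1-a_1]\times[\tfrac14,\tfrac34]$, $f_3([0,1]^2)=[1-a_1+\varepsilon,1]\times[\tfrac34+\varepsilon,1]$. Then for every sufficiently small $\varepsilon>0$ there exists a nonempty open interval $J_\varepsilon$ of values of $a_1$ such that for every $a_1\in J_\varepsilon$, $\dim_{\mathrm A}F=\dim_{\mathrm A}\nu_{\mathbf q^{\sigma}}$ for $\sigma=(1,2)$.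
   Context: $\Sigma=\{1,2,3\}^{\mathbb N}$, $\pi(\mathbf i)=\lim_kf_{i_1}\circ\cdots\circ f_{i_k}(0)$, and for a probability vector $\mathbf p$ with positive entries $\nu_{\mathbf p}=\mathbf p^{\mathbb N}\circ\pi^{-1}$. $\dim_{\mathrm A}F$ is the Assouad dimension of the set $F$; for a measure $\nu$, $\dim_{\mathrm A}\nu$ is the infimum of $s\ge0$ for which some $C>0$ gives $\nu(B(x,R))/\nu(B(x,r))\le C(R/r)^s$ for all $x\in\mathrm{supp}\,\nu$, $0<r<R<|\mathrm{supp}\,\nu|$. Write $\lambda_i^{(1)},\lambda_i^{(2)}$ for the diagonal entries of $A_i$. The measure $\mathbf q^{(1,2)}$: let $\mathcal I_1$ be the set of $j\in\{1,2,3\}$ such that no $i<j$ has $f_i,f_j$ overlapping exactly on the first coordinate axis (equal first coordinates of $f_i(y),f_j(y)$ for all $y\in[0,1]^2$), and for $j$ let $\Pi_1 j$ be the unique element of $\mathcal I_1$ overlapping exactly with $j$ on the first axis. Let $s_0$ solve $\sum_{i\in\mathcal I_1}(\lambda_i^{(1)})^{s_0}=1$ and for $i\in\mathcal I_1$ let $s_1(i)$ solve $\sum_{j:\Pi_1j=i}(\lambda_j^{(2)})^{s_1(i)}=1$; then $q^{(1,2)}(j)=(\lambda^{(1)}_{\Pi_1j})^{s_0}(\lambda^{(2)}_j)^{s_1(\Pi_1j)}$. *)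

theory Defs
  imports "HOL-Probability.Probability"
begin

definition imap :: "(nat \<Rightarrow> real) \<Rightarrow> (nat \<Rightarrow> real) \<Rightarrow> (nat \<Rightarrow> real) \<Rightarrow> (nat \<Rightarrow> real)
    \<Rightarrow> nat \<Rightarrow> real \<times> real \<Rightarrow> real \<times> real" where
  "imap lam1 lam2 t1 t2 i p = (lam1 i * fst p + t1 i, lam2 i * snd p + t2 i)"

definition idx :: "nat set" where "idx = {1,2,3}"

primrec comp_prefix :: "(nat \<Rightarrow> 'a \<Rightarrow> 'a) \<Rightarrow> (nat \<Rightarrow> nat) \<Rightarrow> nat \<Rightarrow> 'a \<Rightarrow> 'a" where
  "comp_prefix f w 0 = id"
| "comp_prefix f w (Suc k) = comp_prefix f w k \<circ> f (w k)"

definition coding :: "(nat \<Rightarrow> real \<times> real \<Rightarrow> real \<times> real) \<Rightarrow> (nat \<Rightarrow> nat) \<Rightarrow> real \<times> real" where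
  "coding f w = lim (\<lambda>k. comp_prefix f w k (0, 0))"

text \<open>Bernoulli measure nu_p = p^N o pi^{-1}; p is a probability vector on {1,2,3}
  (extended by 0 outside).\<close>
definition bernoulli_proj :: "(nat \<Rightarrow> real \<times> real \<Rightarrow> real \<times> real) \<Rightarrow> (nat \<Rightarrow> real)
    \<Rightarrow> (real \<times> real) measure" where
  "bernoulli_proj f p =
     distr (Pi\<^sub>M UNIV (\<lambda>_::nat. measure_pmf (embed_pmf p))) borel (coding f)"

definition unit_sq :: "(real \<times> real) set" where "unit_sq = {0..1} \<times> {0..1}"

definition overlap1 :: "(nat \<Rightarrow> real \<times> real \<Rightarrow> real \<times> real) \<Rightarrow> nat \<Rightarrow> nat \<Rightarrow> bool" where
  "overlap1 f i j \<longleftrightarrow> (\<forall>y\<in>unit_sq. fst (f i y) = fst (f j y))"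

definition I1 :: "(nat \<Rightarrow> real \<times> real \<Rightarrow> real \<times> real) \<Rightarrow> nat set" where
  "I1 f = {j \<in> idx. \<not> (\<exists>i\<in>idx. i < j \<and> overlap1 f i j)}"

definition Pi1 :: "(nat \<Rightarrow> real \<times> real \<Rightarrow> real \<times> real) \<Rightarrow> nat \<Rightarrow> nat" where
  "Pi1 f j = (THE i. i \<in> I1 f \<and> overlap1 f i j)"

definition q12 :: "(nat \<Rightarrow> real) \<Rightarrow> (nat \<Rightarrow> real) \<Rightarrow> (nat \<Rightarrow> real) \<Rightarrow> (nat \<Rightarrow> real)
    \<Rightarrow> nat \<Rightarrow> real" where
  "q12 lam1 lam2 t1 t2 j =
    (let f = imap lam1 lam2 t1 t2;
         s0 = (THE s. (\<Sum>i\<in>I1 f. lam1 i powr s) = 1);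
         s1 = (\<lambda>i. THE s. (\<Sum>j'\<in>{j'\<in>idx. Pi1 f j' = i}. lam2 j' powr s) = 1)
     in if j \<in> idx then lam1 (Pi1 f j) powr s0 * lam2 j powr s1 (Pi1 f j) else 0)"

definition cover_num :: "'a::metric_space set \<Rightarrow> real \<Rightarrow> nat" where
  "cover_num E r = (LEAST n. \<exists>C. finite C \<and> card C = n \<and> E \<subseteq> (\<Union>c\<in>C. cball c r))"

definition assouad_dim_set :: "'a::metric_space set \<Rightarrow> ereal" where
  "assouad_dim_set F = Inf (ereal ` {s. s \<ge> 0 \<and> (\<exists>C>0. \<forall>x\<in>F. \<forall>r R. 0 < r \<and> r < R \<longrightarrow>
       real (cover_num (ball x R \<inter> F) r) \<le> C * (R / r) powr s)})"

definition msupp :: "'a::metric_space measure \<Rightarrow> 'a set" where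
  "msupp \<nu> = {x. \<forall>r>0. emeasure \<nu> (ball x r) > 0}"

definition assouad_dim_measure :: "'a::metric_space measure \<Rightarrow> ereal" where
  "assouad_dim_measure \<nu> = Inf (ereal ` {s. s \<ge> 0 \<and> (\<exists>C>0. \<forall>x\<in>msupp \<nu>. \<forall>r R.
       0 < r \<and> r < R \<and> R < diameter (msupp \<nu>) \<longrightarrow>
       measure \<nu> (ball x R) / measure \<nu> (ball x r) \<le> C * (R / r) powr s)})"

definition lam1_ex :: "real \<Rightarrow> real \<Rightarrow> nat \<Rightarrow> real" where
  "lam1_ex a1 e i = (if i = 2 then 1 - a1 else a1 - e)"
definition lam2_ex :: "real \<Rightarrow> real \<Rightarrow> nat \<Rightarrow> real" where
  "lam2_ex a1 e i = (if i = 2 then 1/2 else 1/4 - e)"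
definition t1_ex :: "real \<Rightarrow> real \<Rightarrow> nat \<Rightarrow> real" where
  "t1_ex a1 e i = (if i = 2 then 0 else 1 - a1 + e)"
definition t2_ex :: "real \<Rightarrow> real \<Rightarrow> nat \<Rightarrow> real" where
  "t2_ex a1 e i = (if i = 1 then 0 else if i = 2 then 1/4 else 3/4 + e)"

definition f_ex :: "real \<Rightarrow> real \<Rightarrow> nat \<Rightarrow> real \<times> real \<Rightarrow> real \<times> real" where
  "f_ex a1 e = imap (lam1_ex a1 e) (lam2_ex a1 e) (t1_ex a1 e) (t2_ex a1 e)"

definition q_ex :: "real \<Rightarrow> real \<Rightarrow> nat \<Rightarrow> real" where
  "q_ex a1 e = q12 (lam1_ex a1 e) (lam2_ex a1 e) (t1_ex a1 e) (t2_ex a1 e)"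

end

theory Submission
  imports Defs
begin

locale ex =
  fixes a1 e :: real
  assumes e_pos: "0 < e" and e_small: "e < 1/8" and a1_gt: "1/3 < a1" and a1_lt: "a1 < 1/2"
begin

abbreviation "l1 \<equiv> lam1_ex a1 e"
abbreviation "l2 \<equiv> lam2_ex a1 e"
abbreviation "tt1 \<equiv> t1_ex a1 e"
abbreviation "tt2 \<equiv> t2_ex a1 e"
abbreviation "ff \<equiv> f_ex a1 e"

definition X :: "(nat \<Rightarrow> nat) \<Rightarrow> nat \<Rightarrow> real" where "X w n = (\<Prod>k<n. l1 (w k))"
definition Y :: "(nat \<Rightarrow> nat) \<Rightarrow> nat \<Rightarrow> real" where "Y w n = (\<Prod>k<n. l2 (w k))"
definition cx :: "(nat \<Rightarrow> nat) \<Rightarrow> real" where "cx w = (\<Sum>k. X w k * tt1 (w k))"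
definition cy :: "(nat \<Rightarrow> nat) \<Rightarrow> real" where "cy w = (\<Sum>k. Y w k * tt2 (w k))"

lemma l1_pos: "0 < l1 i" and l1_le: "l1 i \<le> 2/3" and l1_ge: "5/24 \<le> l1 i"
  and l2_pos: "0 < l2 i" and l2_le: "l2 i \<le> 1/2" and l2_ge: "1/8 \<le> l2 i"
  and l21: "l2 i \<le> l1 i"
  and t1_bd: "0 \<le> tt1 i" "tt1 i \<le> 1" and t2_bd: "0 \<le> tt2 i" "tt2 i \<le> 1"
  using e_pos e_small a1_gt a1_lt
  by (auto simp: lam1_ex_def lam2_ex_def t1_ex_def t2_ex_def)

lemma X_pos: "0 < X w n" unfolding X_def by (intro prod_pos) (auto intro: l1_pos)
lemma Y_pos: "0 < Y w n" unfolding Y_def by (intro prod_pos) (auto intro: l2_pos)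

lemma X_le: "X w n \<le> (2/3)^n"
proof -
  have "X w n \<le> (\<Prod>k<n. 2/3)" unfolding X_def
    by (intro prod_mono conjI less_imp_le[OF l1_pos] l1_le)
  then show ?thesis by simp
qed

lemma Y_le: "Y w n \<le> (1/2)^n"
proof -
  have "Y w n \<le> (\<Prod>k<n. 1/2)" unfolding Y_def
    by (intro prod_mono conjI less_imp_le[OF l2_pos] l2_le)
  then show ?thesis by simp
qed

lemma YX: "Y w n \<le> X w n"
  unfolding X_def Y_def by (intro prod_mono) (auto intro: less_imp_le[OF l2_pos] l21)

lemma X_Suc: "X w (Suc n) = X w n * l1 (w n)" by (simp add: X_def)
lemma Y_Suc: "Y w (Suc n) = Y w n * l2 (w n)" by (simp add: Y_def)
lemma X_0[simp]: "X w 0 = 1" by (simp add: X_def)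
lemma Y_0[simp]: "Y w 0 = 1" by (simp add: Y_def)

lemma X_le1: "X w n \<le> 1"
proof - have "(2/3::real)^n \<le> 1" by (rule power_le_one) auto
  then show ?thesis using X_le[of w n] by linarith qed
lemma Y_le1: "Y w n \<le> 1"
proof - have "(1/2::real)^n \<le> 1" by (rule power_le_one) auto
  then show ?thesis using Y_le[of w n] by linarith qed

lemma summable_x: "summable (\<lambda>k. X w k * tt1 (w k))"
proof (rule summable_comparison_test'[of "\<lambda>k. (2/3::real)^k"])
  show "summable (\<lambda>k. (2/3::real)^k)" by (rule summable_geometric) simp
  fix k show "norm (X w k * tt1 (w k)) \<le> (2/3)^k"
  proof -
    have "norm (X w k * tt1 (w k)) = X w k * tt1 (w k)"
      using X_pos[of w k] t1_bd[of "w k"] by (simp add: abs_mult)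
    also have "\<dots> \<le> X w k" using X_pos[of w k] t1_bd[of "w k"] by (intro mult_right_le_one_le) auto
    finally show ?thesis using X_le[of w k] by linarith
  qed
qed

lemma summable_y: "summable (\<lambda>k. Y w k * tt2 (w k))"
proof (rule summable_comparison_test'[of "\<lambda>k. (1/2::real)^k"])
  show "summable (\<lambda>k. (1/2::real)^k)" by (rule summable_geometric) simp
  fix k show "norm (Y w k * tt2 (w k)) \<le> (1/2)^k"
  proof -
    have "norm (Y w k * tt2 (w k)) = Y w k * tt2 (w k)"
      using Y_pos[of w k] t2_bd[of "w k"] by (simp add: abs_mult)
    also have "\<dots> \<le> Y w k" using Y_pos[of w k] t2_bd[of "w k"] by (intro mult_right_le_one_le) auto
    finally show ?thesis using Y_le[of w k] by linarith
  qed
qed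

lemma ff_apply: "ff i p = (l1 i * fst p + tt1 i, l2 i * snd p + tt2 i)"
  by (simp add: f_ex_def imap_def)

lemma comp_prefix_eq:
  "comp_prefix ff w k p = ((\<Sum>j<k. X w j * tt1 (w j)) + X w k * fst p,
                           (\<Sum>j<k. Y w j * tt2 (w j)) + Y w k * snd p)"
proof (induction k arbitrary: p)
  case 0 then show ?case by simp
next
  case (Suc k)
  have "comp_prefix ff w (Suc k) p = comp_prefix ff w k (ff (w k) p)" by simp
  then show ?case unfolding Suc.IH ff_apply
    by (simp add: X_Suc Y_Suc algebra_simps)
qed

lemma comp_prefix_lim: "(\<lambda>k. comp_prefix ff w k p) \<longlonglongrightarrow> (cx w, cy w)"
proof -
  have X0: "(\<lambda>k. X w k * fst p) \<longlonglongrightarrow> 0"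
  proof (rule Lim_null_comparison[of _ "\<lambda>k. (2/3)^k * \<bar>fst p\<bar>"])
    show "\<forall>\<^sub>F k in sequentially. norm (X w k * fst p) \<le> (2/3)^k * \<bar>fst p\<bar>"
      by (intro always_eventually allI) (simp add: abs_mult mult_right_mono abs_of_pos[OF X_pos] X_le)
    show "(\<lambda>k. (2/3::real)^k * \<bar>fst p\<bar>) \<longlonglongrightarrow> 0"
      by (intro tendsto_mult_left_zero LIMSEQ_power_zero) auto
  qed
  have Y0: "(\<lambda>k. Y w k * snd p) \<longlonglongrightarrow> 0"
  proof (rule Lim_null_comparison[of _ "\<lambda>k. (1/2)^k * \<bar>snd p\<bar>"])
    show "\<forall>\<^sub>F k in sequentially. norm (Y w k * snd p) \<le> (1/2)^k * \<bar>snd p\<bar>"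
      by (intro always_eventually allI) (simp add: abs_mult mult_right_mono abs_of_pos[OF Y_pos] Y_le)
    show "(\<lambda>k. (1/2::real)^k * \<bar>snd p\<bar>) \<longlonglongrightarrow> 0"
      by (intro tendsto_mult_left_zero LIMSEQ_power_zero) auto
  qed
  have "(\<lambda>k. (\<Sum>j<k. X w j * tt1 (w j)) + X w k * fst p) \<longlonglongrightarrow> cx w + 0"
    unfolding cx_def by (intro tendsto_add summable_LIMSEQ summable_x X0)
  moreover have "(\<lambda>k. (\<Sum>j<k. Y w j * tt2 (w j)) + Y w k * snd p) \<longlonglongrightarrow> cy w + 0"
    unfolding cy_def by (intro tendsto_add summable_LIMSEQ summable_y Y0)
  ultimately show ?thesis unfolding comp_prefix_eq by (intro tendsto_Pair) auto
qed

lemma coding_eq: "coding ff w = (cx w, cy w)"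
  unfolding coding_def by (rule limI[OF comp_prefix_lim])

end


context ex begin

definition seqs :: "(nat \<Rightarrow> nat) set" where "seqs = {w. \<forall>k. w k \<in> idx}"
definition sh :: "nat \<Rightarrow> (nat \<Rightarrow> nat) \<Rightarrow> nat \<Rightarrow> nat" where "sh j w = (\<lambda>k. w (j + k))"
abbreviation pt :: "(nat \<Rightarrow> nat) \<Rightarrow> real \<times> real" where "pt w \<equiv> (cx w, cy w)"

lemma comp_prefix_lim_gen:
  assumes B: "\<And>k. norm (p k) \<le> B"
  shows "(\<lambda>k. comp_prefix ff w k (p k)) \<longlonglongrightarrow> (cx w, cy w)"
proof -
  have B0: "0 \<le> B" using B[of 0] norm_ge_zero[of "p 0"] by linarith
  have X0: "(\<lambda>k. X w k * fst (p k)) \<longlonglongrightarrow> 0"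
  proof (rule Lim_null_comparison[of _ "\<lambda>k. (2/3)^k * B"])
    show "\<forall>\<^sub>F k in sequentially. norm (X w k * fst (p k)) \<le> (2/3)^k * B"
    proof (intro always_eventually allI)
      fix k
      have "\<bar>fst (p k)\<bar> \<le> B" using B[of k] norm_fst_le[of "fst (p k)" "snd (p k)"] by simp
      then show "norm (X w k * fst (p k)) \<le> (2/3)^k * B"
        using X_le[of w k] X_pos[of w k] B0 by (simp add: abs_mult abs_of_pos mult_mono)
    qed
    show "(\<lambda>k. (2/3::real)^k * B) \<longlonglongrightarrow> 0"
      by (intro tendsto_mult_left_zero LIMSEQ_power_zero) auto
  qed
  have Y0: "(\<lambda>k. Y w k * snd (p k)) \<longlonglongrightarrow> 0"
  proof (rule Lim_null_comparison[of _ "\<lambda>k. (1/2)^k * B"])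
    show "\<forall>\<^sub>F k in sequentially. norm (Y w k * snd (p k)) \<le> (1/2)^k * B"
    proof (intro always_eventually allI)
      fix k
      have "\<bar>snd (p k)\<bar> \<le> B" using B[of k] norm_snd_le[of "snd (p k)" "fst (p k)"] by simp
      then show "norm (Y w k * snd (p k)) \<le> (1/2)^k * B"
        using Y_le[of w k] Y_pos[of w k] B0 by (simp add: abs_mult abs_of_pos mult_mono)
    qed
    show "(\<lambda>k. (1/2::real)^k * B) \<longlonglongrightarrow> 0"
      by (intro tendsto_mult_left_zero LIMSEQ_power_zero) auto
  qed
  have "(\<lambda>k. (\<Sum>j<k. X w j * tt1 (w j)) + X w k * fst (p k)) \<longlonglongrightarrow> cx w + 0"
    unfolding cx_def by (intro tendsto_add summable_LIMSEQ summable_x X0)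
  moreover have "(\<lambda>k. (\<Sum>j<k. Y w j * tt2 (w j)) + Y w k * snd (p k)) \<longlonglongrightarrow> cy w + 0"
    unfolding cy_def by (intro tendsto_add summable_LIMSEQ summable_y Y0)
  ultimately show ?thesis unfolding comp_prefix_eq by (intro tendsto_Pair) auto
qed

lemma coding_in_closed:
  assumes S: "closed S" "S \<noteq> {}" and inv: "\<And>k. ff (w k) ` S \<subseteq> S"
  shows "pt w \<in> S"
proof -
  obtain p where p: "p \<in> S" using S by auto
  have "comp_prefix ff w k q \<in> S" if "q \<in> S" for k q
    using that
  proof (induction k arbitrary: q)
    case 0 then show ?case by simp
  next
    case (Suc k)
    have "comp_prefix ff w (Suc k) q = comp_prefix ff w k (ff (w k) q)" by simp
    moreover have "ff (w k) q \<in> S" using inv Suc.prems by blast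
    ultimately show ?case using Suc.IH by simp
  qed
  then have "\<forall>k. comp_prefix ff w k p \<in> S" using p by blast
  moreover have "(\<lambda>k. comp_prefix ff w k p) \<longlonglongrightarrow> pt w"
    by (rule comp_prefix_lim_gen[of _ "norm p"]) simp
  ultimately show ?thesis using closed_sequentially[OF S(1), of "\<lambda>k. comp_prefix ff w k p" "pt w"] by blast
qed

lemma ff_ranges:
  assumes "u \<in> unit_sq"
  shows "(i = 2 \<longrightarrow> 0 \<le> fst (ff i u) \<and> fst (ff i u) \<le> 1 - a1) \<and>
         (i \<noteq> 2 \<longrightarrow> 1 - a1 + e \<le> fst (ff i u) \<and> fst (ff i u) \<le> 1) \<and>
         (i = 1 \<longrightarrow> 0 \<le> snd (ff i u) \<and> snd (ff i u) \<le> 1/4 - e) \<and>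
         (i = 2 \<longrightarrow> 1/4 \<le> snd (ff i u) \<and> snd (ff i u) \<le> 3/4) \<and>
         (i \<noteq> 1 \<and> i \<noteq> 2 \<longrightarrow> 3/4 + e \<le> snd (ff i u) \<and> snd (ff i u) \<le> 1)"
proof -
  obtain x y where q: "u = (x, y)" and b: "0 \<le> x" "x \<le> 1" "0 \<le> y" "y \<le> 1"
    using assms by (cases u) (auto simp: unit_sq_def)
  have p1: "0 \<le> (a1 - e) * x" "(a1 - e) * x \<le> a1 - e"
    "0 \<le> (1 - a1) * x" "(1 - a1) * x \<le> 1 - a1"
    "0 \<le> (1/4 - e) * y" "(1/4 - e) * y \<le> 1/4 - e"
    "0 \<le> (1/2) * y" "(1/2) * y \<le> 1/2"
  proof -
    have ae: "0 \<le> a1 - e" "0 \<le> 1 - a1" "0 \<le> 1/4 - e" "0 \<le> (1/2::real)"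
      using e_pos e_small a1_gt a1_lt by linarith+
    show "0 \<le> (a1 - e) * x" by (rule mult_nonneg_nonneg[OF ae(1) b(1)])
    show "(a1 - e) * x \<le> a1 - e" by (rule mult_left_le[OF b(2) ae(1)])
    show "0 \<le> (1 - a1) * x" by (rule mult_nonneg_nonneg[OF ae(2) b(1)])
    show "(1 - a1) * x \<le> 1 - a1" by (rule mult_left_le[OF b(2) ae(2)])
    show "0 \<le> (1/4 - e) * y" by (rule mult_nonneg_nonneg[OF ae(3) b(3)])
    show "(1/4 - e) * y \<le> 1/4 - e" by (rule mult_left_le[OF b(4) ae(3)])
    show "0 \<le> (1/2) * y" by (rule mult_nonneg_nonneg[OF ae(4) b(3)])
    show "(1/2) * y \<le> 1/2" by (rule mult_left_le[OF b(4) ae(4)])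
  qed
  have fq: "fst (ff i u) = (if i = 2 then (1-a1)*x else (a1-e)*x + (1-a1+e))"
    by (simp add: q ff_apply lam1_ex_def t1_ex_def)
  have sq: "snd (ff i u) = (if i = 1 then (1/4-e)*y else if i = 2 then (1/2)*y + 1/4 else (1/4-e)*y + (3/4+e))"
    by (simp add: q ff_apply lam2_ex_def t2_ex_def)
  show ?thesis
  proof (cases "i = 2")
    case True
    then have "fst (ff i u) = (1-a1)*x" "snd (ff i u) = (1/2)*y + 1/4" using fq sq by simp_all
    then show ?thesis using True p1 a1_lt by linarith
  next
    case F2: False
    then have f: "fst (ff i u) = (a1-e)*x + (1-a1+e)" using fq by simp
    show ?thesis
    proof (cases "i = 1")
      case True
      then have "snd (ff i u) = (1/4-e)*y" using sq by simp
      then show ?thesis using True f p1 e_pos e_small by (simp; linarith)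
    next
      case False
      then have "snd (ff i u) = (1/4-e)*y + (3/4+e)" using sq F2 by simp
      then show ?thesis using False F2 f p1 e_pos e_small by (simp; linarith)
    qed
  qed
qed

lemma unit_inv: "ff i ` unit_sq \<subseteq> unit_sq"
proof
  fix q assume "q \<in> ff i ` unit_sq"
  then obtain u where u: "u \<in> unit_sq" "q = ff i u" by auto
  have "0 \<le> fst q \<and> fst q \<le> 1 \<and> 0 \<le> snd q \<and> snd q \<le> 1"
  proof (cases "i = 2")
    case True then show ?thesis using ff_ranges[OF u(1), of i] e_pos e_small a1_gt a1_lt unfolding u(2) by auto
  next
    case False then show ?thesis using ff_ranges[OF u(1), of i] e_pos e_small a1_gt a1_lt unfolding u(2)
      by (cases "i = 1") auto
  qed
  then show "q \<in> unit_sq" by (cases q) (auto simp: unit_sq_def)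
qed

lemma closed_unit: "closed unit_sq" unfolding unit_sq_def by (intro closed_Times) auto

lemma pt_unit: "pt w \<in> unit_sq"
  by (rule coding_in_closed[OF closed_unit _ unit_inv]) (auto simp: unit_sq_def)

lemma cx_bd: "0 \<le> cx w" "cx w \<le> 1" and cy_bd: "0 \<le> cy w" "cy w \<le> 1"
  using pt_unit[of w] by (auto simp: unit_sq_def)

end


context ex begin
lemma attractor_coded:
  assumes F: "compact F" "F = (\<Union>i\<in>idx. ff i ` F)" and x: "x \<in> F"
  shows "\<exists>w\<in>seqs. x = pt w"
proof -
  have ex: "\<exists>iz. fst iz \<in> idx \<and> snd iz \<in> F \<and> y = ff (fst iz) (snd iz)" if "y \<in> F" for y
  proof -
    have "y \<in> (\<Union>i\<in>idx. ff i ` F)" by (subst F(2)[symmetric]) (rule that)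
    then obtain i z where "i \<in> idx" "z \<in> F" "y = ff i z" by blast
    then show ?thesis by (intro exI[of _ "(i, z)"]) simp
  qed
  define nxt where "nxt y = (SOME iz. fst iz \<in> idx \<and> snd iz \<in> F \<and> y = ff (fst iz) (snd iz))" for y
  have nxt: "fst (nxt y) \<in> idx \<and> snd (nxt y) \<in> F \<and> y = ff (fst (nxt y)) (snd (nxt y))" if "y \<in> F" for y
    unfolding nxt_def using someI_ex[OF ex[OF that]] .
  define ys where "ys k = ((snd \<circ> nxt) ^^ k) x" for k
  define w where "w k = fst (nxt (ys k))" for k
  have ysS: "ys (Suc k) = snd (nxt (ys k))" for k by (simp add: ys_def)
  have ysF: "ys k \<in> F" for k
  proof (induction k)
    case 0 then show ?case by (simp add: ys_def x)
  next
    case (Suc k) then show ?case unfolding ysS using nxt[OF Suc] by blast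
  qed
  have w: "w \<in> seqs" unfolding seqs_def w_def using nxt[OF ysF] by blast
  have eq: "comp_prefix ff w k (ys k) = x" for k
  proof (induction k)
    case 0 then show ?case by (simp add: ys_def)
  next
    case (Suc k)
    have "comp_prefix ff w (Suc k) (ys (Suc k)) = comp_prefix ff w k (ff (w k) (ys (Suc k)))" by simp
    also have "ff (w k) (ys (Suc k)) = ys k" using nxt[OF ysF[of k]] by (simp add: w_def ysS)
    finally show ?case using Suc by simp
  qed
  obtain B where B: "\<And>y. y \<in> F \<Longrightarrow> norm y \<le> B"
    using compact_imp_bounded[OF F(1)] by (auto simp: bounded_iff)
  have "(\<lambda>k. comp_prefix ff w k (ys k)) \<longlonglongrightarrow> pt w"
    by (rule comp_prefix_lim_gen[of _ B]) (use B ysF in auto)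
  then have "(\<lambda>k. x) \<longlonglongrightarrow> pt w" unfolding eq .
  then have "x = pt w" using LIMSEQ_unique tendsto_const by blast
  with w show ?thesis by blast
qed

lemma coded_in_attractor:
  assumes F: "compact F" "F \<noteq> {}" "F = (\<Union>i\<in>idx. ff i ` F)" and w: "w \<in> seqs"
  shows "pt w \<in> F"
proof (rule coding_in_closed)
  show "closed F" using compact_imp_closed[OF F(1)] .
  show "F \<noteq> {}" by fact
  fix k have "w k \<in> idx" using w by (auto simp: seqs_def)
  then have "ff (w k) ` F \<subseteq> (\<Union>i\<in>idx. ff i ` F)" by (rule UN_upper)
  then show "ff (w k) ` F \<subseteq> F" by (simp only: F(3)[symmetric])
qed

end


context ex begin
lemma X_add: "X w (j + n) = X w j * X (sh j w) n"
  by (induction n) (simp_all add: X_Suc sh_def)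
lemma Y_add: "Y w (j + n) = Y w j * Y (sh j w) n"
  by (induction n) (simp_all add: Y_Suc sh_def)

lemma cx_shift: "cx w = (\<Sum>k<j. X w k * tt1 (w k)) + X w j * cx (sh j w)"
proof -
  have "cx w = (\<Sum>n. X w (n + j) * tt1 (w (n + j))) + (\<Sum>k<j. X w k * tt1 (w k))"
    unfolding cx_def by (rule suminf_split_initial_segment[OF summable_x[of w], of j])
  also have "(\<Sum>n. X w (n + j) * tt1 (w (n + j))) = (\<Sum>n. X w j * (X (sh j w) n * tt1 (sh j w n)))"
  proof (rule suminf_cong)
    fix n
    have "X w (n + j) = X w j * X (sh j w) n" using X_add[of w j n] by (simp add: add.commute)
    moreover have "sh j w n = w (n + j)" by (simp add: sh_def add.commute)
    ultimately show "X w (n + j) * tt1 (w (n + j)) = X w j * (X (sh j w) n * tt1 (sh j w n))" by simp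
  qed
  also have "\<dots> = X w j * cx (sh j w)" unfolding cx_def
    by (rule suminf_mult[OF summable_x[of "sh j w"]])
  finally show ?thesis by simp
qed

lemma cy_shift: "cy w = (\<Sum>k<j. Y w k * tt2 (w k)) + Y w j * cy (sh j w)"
proof -
  have "cy w = (\<Sum>n. Y w (n + j) * tt2 (w (n + j))) + (\<Sum>k<j. Y w k * tt2 (w k))"
    unfolding cy_def by (rule suminf_split_initial_segment[OF summable_y[of w], of j])
  also have "(\<Sum>n. Y w (n + j) * tt2 (w (n + j))) = (\<Sum>n. Y w j * (Y (sh j w) n * tt2 (sh j w n)))"
  proof (rule suminf_cong)
    fix n
    have "Y w (n + j) = Y w j * Y (sh j w) n" using Y_add[of w j n] by (simp add: add.commute)
    moreover have "sh j w n = w (n + j)" by (simp add: sh_def add.commute)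
    ultimately show "Y w (n + j) * tt2 (w (n + j)) = Y w j * (Y (sh j w) n * tt2 (sh j w n))" by simp
  qed
  also have "\<dots> = Y w j * cy (sh j w)" unfolding cy_def
    by (rule suminf_mult[OF summable_y[of "sh j w"]])
  finally show ?thesis by simp
qed

lemma sh_Suc: "sh (Suc j) w = sh (Suc 0) (sh j w)" by (simp add: sh_def)
lemma sh_0: "sh j w 0 = w j" by (simp add: sh_def)

lemma pt_step: "pt (sh j w) = ff (w j) (pt (sh (Suc j) w))"
proof -
  have "cx (sh j w) = X (sh j w) 1 * cx (sh 1 (sh j w)) + tt1 (sh j w 0)"
    using cx_shift[of "sh j w" 1] by simp
  moreover have "cy (sh j w) = Y (sh j w) 1 * cy (sh 1 (sh j w)) + tt2 (sh j w 0)"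
    using cy_shift[of "sh j w" 1] by simp
  moreover have "sh (Suc 0) (sh j w) = sh (Suc j) w" by (simp add: sh_def)
  ultimately show ?thesis by (simp add: ff_apply sh_0 X_def Y_def)
qed

definition col :: "nat \<Rightarrow> bool" where "col i = (i = 2)"

lemma l1_col: "col i = col i' \<Longrightarrow> l1 i = l1 i'"
  by (simp add: col_def lam1_ex_def)
lemma t1_col: "col i = col i' \<Longrightarrow> tt1 i = tt1 i'"
  by (simp add: col_def t1_ex_def)

lemma X_col: "(\<And>k. k < j \<Longrightarrow> col (w k) = col (w' k)) \<Longrightarrow> X w j = X w' j"
  unfolding X_def by (intro prod.cong refl l1_col) auto
lemma X_agree: "(\<And>k. k < j \<Longrightarrow> w k = w' k) \<Longrightarrow> X w j = X w' j"
  unfolding X_def by (intro prod.cong refl) auto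
lemma Y_agree: "(\<And>k. k < j \<Longrightarrow> w k = w' k) \<Longrightarrow> Y w j = Y w' j"
  unfolding Y_def by (intro prod.cong refl) auto

lemma cx_diff:
  assumes "\<And>k. k < j \<Longrightarrow> col (w k) = col (w' k)"
  shows "cx w - cx w' = X w j * (cx (sh j w) - cx (sh j w'))"
proof -
  have "(\<Sum>k<j. X w k * tt1 (w k)) = (\<Sum>k<j. X w' k * tt1 (w' k))"
    using assms by (intro sum.cong refl arg_cong2[where f="(*)"] X_col t1_col) auto
  then show ?thesis using cx_shift[of w j] cx_shift[of w' j] X_col[OF assms]
    by (simp add: algebra_simps)
qed

lemma cy_diff:
  assumes "\<And>k. k < j \<Longrightarrow> w k = w' k"
  shows "cy w - cy w' = Y w j * (cy (sh j w) - cy (sh j w'))"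
proof -
  have "(\<Sum>k<j. Y w k * tt2 (w k)) = (\<Sum>k<j. Y w' k * tt2 (w' k))"
    using assms by (intro sum.cong refl arg_cong2[where f="(*)"] Y_agree) auto
  then show ?thesis using cy_shift[of w j] cy_shift[of w' j] Y_agree[OF assms]
    by (simp add: algebra_simps)
qed

end


context ex begin
lemma first_sep:
  assumes "i \<in> idx" "i' \<in> idx" "i \<noteq> i'" "u \<in> unit_sq" "u' \<in> unit_sq"
  shows "(col i \<noteq> col i' \<longrightarrow> e \<le> \<bar>fst (ff i u) - fst (ff i' u')\<bar>) \<and>
         (col i = col i' \<longrightarrow> 1/2 \<le> \<bar>snd (ff i u) - snd (ff i' u')\<bar>)"
proof -
  note r = ff_ranges[OF assms(4), of i] ff_ranges[OF assms(5), of i']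
  define A where "A = fst (ff i u)"
  define A' where "A' = fst (ff i' u')"
  define B where "B = snd (ff i u)"
  define B' where "B' = snd (ff i' u')"
  have ab: "A - A' \<le> \<bar>A - A'\<bar>" "A' - A \<le> \<bar>A - A'\<bar>" "B - B' \<le> \<bar>B - B'\<bar>" "B' - B \<le> \<bar>B - B'\<bar>"
    by linarith+
  have ii: "i = 1 \<or> i = 2 \<or> i = 3" "i' = 1 \<or> i' = 2 \<or> i' = 3" using assms(1,2) by (auto simp: idx_def)
  have rA: "i = 2 \<Longrightarrow> A \<le> 1 - a1" "i \<noteq> 2 \<Longrightarrow> 1 - a1 + e \<le> A"
    "i' = 2 \<Longrightarrow> A' \<le> 1 - a1" "i' \<noteq> 2 \<Longrightarrow> 1 - a1 + e \<le> A'"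
    "i = 1 \<Longrightarrow> B \<le> 1/4 - e" "i \<noteq> 1 \<and> i \<noteq> 2 \<Longrightarrow> 3/4 + e \<le> B"
    "i' = 1 \<Longrightarrow> B' \<le> 1/4 - e" "i' \<noteq> 1 \<and> i' \<noteq> 2 \<Longrightarrow> 3/4 + e \<le> B'"
    using r unfolding A_def A'_def B_def B'_def by blast+
  have c1: "e \<le> \<bar>A - A'\<bar>" if "col i \<noteq> col i'"
  proof (cases "i = 2")
    case True
    then have "i' \<noteq> 2" using that by (simp add: col_def)
    then show ?thesis using rA(1)[OF True] rA(4) ab(2) by linarith
  next
    case False
    then have "i' = 2" using that by (simp add: col_def)
    then show ?thesis using rA(2)[OF False] rA(3) ab(1) by linarith
  qed
  have c2: "1/2 \<le> \<bar>B - B'\<bar>" if "col i = col i'"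
  proof -
    have n2: "i \<noteq> 2" "i' \<noteq> 2" using that assms(3) by (auto simp: col_def)
    show ?thesis
    proof (cases "i = 1")
      case True
      then have "i' = 3" using n2 ii assms(3) by auto
      then show ?thesis using rA(5)[OF True] rA(8) ab(4) e_pos by simp
    next
      case False
      then have "i' = 1" using n2 ii assms(3) by auto
      then show ?thesis using rA(6) False n2 rA(7) ab(3) e_pos by simp
    qed
  qed
  show ?thesis unfolding A_def[symmetric] A'_def[symmetric] B_def[symmetric] B'_def[symmetric]
    using c1 c2 by blast
qed

lemma dist_ge_fst: "\<bar>fst p - fst q\<bar> \<le> dist p q" using dist_fst_le[of p q] by (simp add: dist_real_def)
lemma dist_ge_snd: "\<bar>snd p - snd q\<bar> \<le> dist p q" using dist_snd_le[of p q] by (simp add: dist_real_def)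
lemma dist_le_sum: "dist p q \<le> \<bar>fst p - fst q\<bar> + \<bar>snd p - snd q\<bar>"
  by (simp add: dist_prod_def dist_real_def sqrt_sum_squares_le_sum_abs)

lemma sep_letter:
  assumes w: "w \<in> seqs" "w' \<in> seqs" and agree: "\<And>k. k < j \<Longrightarrow> w k = w' k" and d: "w j \<noteq> w' j"
  shows "e * Y w j \<le> dist (pt w) (pt w')"
proof -
  have wj: "w j \<in> idx" "w' j \<in> idx" using w by (auto simp: seqs_def)
  have P: "pt (sh j w) = ff (w j) (pt (sh (Suc j) w))" "pt (sh j w') = ff (w' j) (pt (sh (Suc j) w'))"
    by (rule pt_step)+
  note fs = first_sep[OF wj d pt_unit pt_unit, of "sh (Suc j) w" "sh (Suc j) w'", folded P]
  have dx: "cx w - cx w' = X w j * (cx (sh j w) - cx (sh j w'))"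
    by (rule cx_diff) (use agree in auto)
  have dy: "cy w - cy w' = Y w j * (cy (sh j w) - cy (sh j w'))"
    by (rule cy_diff) (use agree in auto)
  show ?thesis
  proof (cases "col (w j) = col (w' j)")
    case True
    then have "1/2 \<le> \<bar>cy (sh j w) - cy (sh j w')\<bar>" using fs by simp
    then have "Y w j * (1/2) \<le> \<bar>cy w - cy w'\<bar>" unfolding dy
      using Y_pos[of w j] by (simp add: abs_mult mult_left_mono)
    moreover have "e * Y w j \<le> Y w j * (1/2)" using e_small Y_pos[of w j] by simp
    ultimately show ?thesis using dist_ge_snd[of "pt w" "pt w'"] by simp
  next
    case False
    then have "e \<le> \<bar>cx (sh j w) - cx (sh j w')\<bar>" using fs by simp
    then have "X w j * e \<le> \<bar>cx w - cx w'\<bar>" unfolding dx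
      using X_pos[of w j] by (simp add: abs_mult mult_left_mono)
    moreover have "e * Y w j \<le> X w j * e" using e_pos YX[of w j] by (simp add: mult.commute)
    ultimately show ?thesis using dist_ge_fst[of "pt w" "pt w'"] by simp
  qed
qed

lemma sep_col:
  assumes w: "w \<in> seqs" "w' \<in> seqs" and agree: "\<And>k. k < j \<Longrightarrow> col (w k) = col (w' k)"
    and d: "col (w j) \<noteq> col (w' j)"
  shows "e * X w j \<le> dist (pt w) (pt w')"
proof -
  have wj: "w j \<in> idx" "w' j \<in> idx" using w by (auto simp: seqs_def)
  have dd: "w j \<noteq> w' j" using d by auto
  have P: "pt (sh j w) = ff (w j) (pt (sh (Suc j) w))" "pt (sh j w') = ff (w' j) (pt (sh (Suc j) w'))"
    by (rule pt_step)+
  note fs = first_sep[OF wj dd pt_unit pt_unit, of "sh (Suc j) w" "sh (Suc j) w'", folded P]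
  have dx: "cx w - cx w' = X w j * (cx (sh j w) - cx (sh j w'))"
    by (rule cx_diff) (use agree in auto)
  have "e \<le> \<bar>cx (sh j w) - cx (sh j w')\<bar>" using fs d by simp
  then have "X w j * e \<le> \<bar>cx w - cx w'\<bar>" unfolding dx
    using X_pos[of w j] by (simp add: abs_mult mult_left_mono)
  then show ?thesis using dist_ge_fst[of "pt w" "pt w'"] by (simp add: mult.commute)
qed

lemma prox:
  assumes a: "\<And>k. k < a \<Longrightarrow> w k = w' k" and b: "\<And>k. k < b \<Longrightarrow> col (w k) = col (w' k)"
  shows "dist (pt w) (pt w') \<le> X w b + Y w a"
proof -
  have dx: "cx w - cx w' = X w b * (cx (sh b w) - cx (sh b w'))" by (rule cx_diff) (use b in auto)
  have dy: "cy w - cy w' = Y w a * (cy (sh a w) - cy (sh a w'))" by (rule cy_diff) (use a in auto)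
  have "\<bar>cx (sh b w) - cx (sh b w')\<bar> \<le> 1" using cx_bd[of "sh b w"] cx_bd[of "sh b w'"] by linarith
  then have "\<bar>cx w - cx w'\<bar> \<le> X w b" unfolding dx using X_pos[of w b]
    by (simp add: abs_mult mult_left_le)
  moreover have "\<bar>cy (sh a w) - cy (sh a w')\<bar> \<le> 1" using cy_bd[of "sh a w"] cy_bd[of "sh a w'"] by linarith
  then have "\<bar>cy w - cy w'\<bar> \<le> Y w a" unfolding dy using Y_pos[of w a]
    by (simp add: abs_mult mult_left_le)
  ultimately show ?thesis using dist_le_sum[of "pt w" "pt w'"] by simp
qed

end


context ex begin

abbreviation "lA \<equiv> a1 - e"
abbreviation "lB \<equiv> 1 - a1"
abbreviation "mu \<equiv> 1/4 - e"

lemma lA_bds: "0 < lA" "lA < 1" and lB_bds: "0 < lB" "lB < 1" and mu_bds: "0 < mu" "mu < 1"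
  and mu_lA: "mu < lA"
  using e_pos e_small a1_gt a1_lt by auto

definition gs :: "real \<Rightarrow> real" where "gs s = lA powr s + lB powr s"

lemma gs_strict: "s < s' \<Longrightarrow> gs s' < gs s"
  unfolding gs_def using powr_less_mono'[OF lA_bds, of s s'] powr_less_mono'[OF lB_bds, of s s'] by simp

lemma gs_ex: "\<exists>s. 0 \<le> s \<and> s \<le> 1 \<and> gs s = 1"
proof (rule IVT2)
  show "gs 1 \<le> 1" using lA_bds lB_bds e_pos by (simp add: gs_def)
  show "1 \<le> gs 0" using lA_bds lB_bds by (simp add: gs_def)
  show "(0::real) \<le> 1" by simp
  show "\<forall>x. 0 \<le> x \<and> x \<le> 1 \<longrightarrow> isCont gs x"
    unfolding gs_def using lA_bds lB_bds by (auto intro!: continuous_intros)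
qed

definition s0 :: real where "s0 = (THE s. lA powr s + lB powr s = 1)"

lemma s0_unique: "\<exists>!s. lA powr s + lB powr s = 1"
proof -
  obtain s where s: "gs s = 1" using gs_ex by blast
  show ?thesis
  proof (rule ex1I[of _ s])
    show "lA powr s + lB powr s = 1" using s by (simp add: gs_def)
    fix s' assume "lA powr s' + lB powr s' = 1"
    then have "gs s' = 1" by (simp add: gs_def)
    then show "s' = s" using s gs_strict by (metis less_irrefl linorder_neqE)
  qed
qed

lemma s0_eq: "lA powr s0 + lB powr s0 = 1"
  unfolding s0_def by (rule theI'[OF s0_unique])

lemma s0_pos: "0 < s0"
proof (rule ccontr)
  assume "\<not> 0 < s0"
  then have "gs 0 \<le> gs s0" using gs_strict[of s0 0] by (cases "s0 = 0") auto
  then show False using s0_eq lA_bds lB_bds by (simp add: gs_def)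
qed

definition tt :: real where "tt = log mu (1/2)"

lemma mu_tt: "mu powr tt = 1/2" unfolding tt_def using mu_bds by simp

lemma tt_pos: "0 < tt"
proof -
  have "ln (1/2::real) < 0" by simp
  moreover have "ln mu < 0" using mu_bds by simp
  ultimately show ?thesis unfolding tt_def log_def by (simp add: divide_neg_neg)
qed

definition qq :: "nat \<Rightarrow> real" where
  "qq j = (if j = 1 \<or> j = 3 then lA powr s0 / 2 else if j = 2 then lB powr s0 else 0)"

lemma overlap_13: "overlap1 ff 1 3" unfolding overlap1_def by (simp add: ff_apply lam1_ex_def t1_ex_def)
lemma overlap_refl: "overlap1 ff i i" unfolding overlap1_def by simp
lemma overlap_sym: "overlap1 ff i j \<Longrightarrow> overlap1 ff j i" unfolding overlap1_def by simp
lemma not_overlap_2: "i \<noteq> 2 \<Longrightarrow> \<not> overlap1 ff i 2"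
proof
  assume "i \<noteq> 2" "overlap1 ff i 2"
  then have "fst (ff i (0,0)) = fst (ff 2 (0,0))" unfolding overlap1_def unit_sq_def by auto
  then show False using \<open>i \<noteq> 2\<close> e_pos a1_lt by (simp add: ff_apply lam1_ex_def t1_ex_def)
qed

lemma I1_eq: "I1 ff = {1, 2}"
proof -
  have "1 \<in> I1 ff" by (auto simp: I1_def idx_def)
  moreover have "2 \<in> I1 ff" using not_overlap_2 by (auto simp: I1_def idx_def)
  moreover have "3 \<notin> I1 ff" using overlap_13 by (auto simp: I1_def idx_def)
  moreover have "I1 ff \<subseteq> idx" by (auto simp: I1_def)
  ultimately show ?thesis by (auto simp: idx_def)
qed

lemma Pi1_eq: "Pi1 ff j = (if j = 2 then 2 else 1)" if "j \<in> idx"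
proof (cases "j = 2")
  case True
  have "(THE i. i \<in> I1 ff \<and> overlap1 ff i j) = 2"
    by (rule the_equality) (use True not_overlap_2 overlap_refl in \<open>auto simp: I1_eq\<close>)
  then show ?thesis using True by (simp add: Pi1_def)
next
  case False
  then have j: "j = 1 \<or> j = 3" using that by (auto simp: idx_def)
  have "(THE i. i \<in> I1 ff \<and> overlap1 ff i j) = 1"
  proof (rule the_equality)
    show "1 \<in> I1 ff \<and> overlap1 ff 1 j" using j overlap_13 overlap_refl by (auto simp: I1_eq)
    fix i assume "i \<in> I1 ff \<and> overlap1 ff i j"
    then show "i = 1" using not_overlap_2[of j] False overlap_sym by (auto simp: I1_eq)
  qed
  then show ?thesis using False by (simp add: Pi1_def)
qed

lemma set1: "{j' \<in> idx. Pi1 ff j' = 1} = {1, 3}" using Pi1_eq by (auto simp: idx_def)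
lemma set2: "{j' \<in> idx. Pi1 ff j' = 2} = {2}" using Pi1_eq by (auto simp: idx_def)

lemma q_ex_eq: "q_ex a1 e = qq"
proof
  fix j
  have f: "imap l1 l2 tt1 tt2 = ff" by (simp add: f_ex_def)
  have th0: "(THE s. (\<Sum>i\<in>I1 ff. l1 i powr s) = 1) = s0"
    unfolding I1_eq s0_def by (simp add: lam1_ex_def)
  have th1: "(THE s. (\<Sum>j'\<in>{j'\<in>idx. Pi1 ff j' = 1}. l2 j' powr s) = 1) = tt"
  proof (rule the_equality)
    show "(\<Sum>j'\<in>{j'\<in>idx. Pi1 ff j' = 1}. l2 j' powr tt) = 1"
      unfolding set1 using mu_tt by (simp add: lam2_ex_def)
    fix s assume "(\<Sum>j'\<in>{j'\<in>idx. Pi1 ff j' = 1}. l2 j' powr s) = 1"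
    then have "mu powr s = mu powr tt" unfolding set1 using mu_tt by (simp add: lam2_ex_def)
    then show "s = tt" using mu_bds powr_inj by auto
  qed
  have th2: "(THE s. (\<Sum>j'\<in>{j'\<in>idx. Pi1 ff j' = 2}. l2 j' powr s) = 1) = 0"
  proof (rule the_equality)
    show "(\<Sum>j'\<in>{j'\<in>idx. Pi1 ff j' = 2}. l2 j' powr 0) = 1"
      unfolding set2 by (simp add: lam2_ex_def)
    fix s assume "(\<Sum>j'\<in>{j'\<in>idx. Pi1 ff j' = 2}. l2 j' powr s) = 1"
    then have "(1/2::real) powr s = (1/2) powr 0" unfolding set2 by (simp add: lam2_ex_def)
    then show "s = 0" using powr_inj[of "1/2::real" s 0] by simp
  qed
  show "q_ex a1 e j = qq j"
  proof (cases "j \<in> idx")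
    case False
    then show ?thesis unfolding q_ex_def q12_def Let_def f by (auto simp: qq_def idx_def)
  next
    case True
    then have j: "j = 1 \<or> j = 2 \<or> j = 3" by (auto simp: idx_def)
    show ?thesis
      unfolding q_ex_def q12_def Let_def f th0 using True Pi1_eq[OF True] j th1 th2 mu_tt
      by (auto simp: qq_def lam1_ex_def lam2_ex_def)
  qed
qed

end


context ex begin

lemma qq_nonneg: "0 \<le> qq j" unfolding qq_def using lA_bds lB_bds by auto
lemma qq_zero: "j \<notin> idx \<Longrightarrow> qq j = 0" unfolding qq_def idx_def by auto
lemma qq_sum: "(\<Sum>j\<in>idx. qq j) = 1"
  unfolding idx_def qq_def using s0_eq by simp

lemma qq_integral: "(\<integral>\<^sup>+x. ennreal (qq x) \<partial>count_space UNIV) = 1"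
proof -
  have "(\<integral>\<^sup>+x. ennreal (qq x) \<partial>count_space UNIV) = (\<Sum>x\<in>idx. ennreal (qq x))"
    by (rule nn_integral_count_space') (auto simp: qq_zero idx_def)
  also have "\<dots> = ennreal (\<Sum>x\<in>idx. qq x)" by (rule sum_ennreal) (simp add: qq_nonneg)
  finally show ?thesis by (simp add: qq_sum)
qed

definition P0 :: "nat pmf" where "P0 = embed_pmf qq"

lemma pmf_P0: "pmf P0 j = qq j"
  unfolding P0_def by (rule pmf_embed_pmf[OF qq_nonneg qq_integral])

definition PM :: "(nat \<Rightarrow> nat) measure" where "PM = PiM UNIV (\<lambda>_. measure_pmf P0)"

lemma pps: "product_prob_space (\<lambda>_::nat. measure_pmf P0)"
  unfolding product_prob_space_def product_prob_space_axioms_def product_sigma_finite_def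
  by (simp add: prob_space_measure_pmf prob_space_imp_sigma_finite)

lemma space_PM[simp]: "space PM = UNIV"
  by (simp add: PM_def space_PiM)

lemma sets_PM: "sets PM = sets (PiM UNIV (\<lambda>_. measure_pmf P0))" by (simp add: PM_def)

lemma prob_PM: "prob_space PM"
  unfolding PM_def by (rule prob_space_PiM) (simp add: prob_space_measure_pmf)

interpretation PMp: prob_space PM by (rule prob_PM)

lemma prob_P0: "finite S \<Longrightarrow> measure (measure_pmf P0) S = (\<Sum>j\<in>S. qq j)"
  by (simp add: measure_measure_pmf_finite pmf_P0)

lemma cyl_measure:
  assumes "finite J" "\<And>i. i \<in> J \<Longrightarrow> finite (S i)"
  shows "measure PM {w. \<forall>i\<in>J. w i \<in> S i} = (\<Prod>i\<in>J. \<Sum>j\<in>S i. qq j)"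
proof -
  have "emeasure PM {w \<in> space PM. \<forall>i\<in>J. w i \<in> S i} = (\<Prod>i\<in>J. emeasure (measure_pmf P0) (S i))"
    unfolding PM_def by (rule product_prob_space.emeasure_PiM_Collect[OF pps]) (use assms in auto)
  also have "\<dots> = (\<Prod>i\<in>J. ennreal (\<Sum>j\<in>S i. qq j))"
    by (intro prod.cong refl) (simp add: measure_pmf.emeasure_eq_measure prob_P0 assms)
  also have "\<dots> = ennreal (\<Prod>i\<in>J. \<Sum>j\<in>S i. qq j)"
    by (rule prod_ennreal) (simp add: sum_nonneg qq_nonneg)
  finally show ?thesis
    by (simp add: PMp.emeasure_eq_measure prod_nonneg sum_nonneg qq_nonneg)
qed

lemma meas_comp: "(\<lambda>w. g (w k)) \<in> borel_measurable PM"
proof -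
  have "(\<lambda>w. w k) \<in> measurable PM (measure_pmf P0)"
    unfolding PM_def by (rule measurable_component_singleton) simp
  moreover have "g \<in> measurable (measure_pmf P0) borel" by simp
  ultimately show ?thesis by (rule measurable_compose)
qed

lemma sets_comp: "{w. w k \<in> A} \<in> sets PM"
proof -
  have "(\<lambda>w. w k) \<in> measurable PM (measure_pmf P0)"
    unfolding PM_def by (rule measurable_component_singleton) simp
  then have "(\<lambda>w. w k) -` A \<inter> space PM \<in> sets PM" by (rule measurable_sets) simp
  then show ?thesis by (simp add: vimage_def)
qed

lemma sets_cyl: "finite J \<Longrightarrow> {w. \<forall>i\<in>J. w i \<in> S i} \<in> sets PM"
proof (induction J rule: finite_induct)
  case empty
  show ?case using sets.top[of PM] by simp
next
  case (insert x F)
  have "{w. \<forall>i\<in>insert x F. w i \<in> S i} = {w. w x \<in> S x} \<inter> {w. \<forall>i\<in>F. w i \<in> S i}" by auto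
  then show ?case using insert sets_comp by simp
qed

lemma sets_seqs: "seqs \<in> sets PM"
proof -
  have "seqs = (\<Inter>k. {w. w k \<in> idx})" by (auto simp: seqs_def)
  moreover have "(\<Inter>k. {w. w k \<in> idx}) \<in> sets PM" using sets_comp by blast
  ultimately show ?thesis by simp
qed

lemma AE_seqs: "AE w in PM. w \<in> seqs"
proof -
  have "AE w in PM. w k \<in> idx" for k
  proof -
    have "AE j in measure_pmf P0. j \<in> idx"
      using qq_zero by (auto simp: AE_measure_pmf_iff set_pmf_eq pmf_P0)
    then show ?thesis unfolding PM_def
      by (intro AE_PiM_component) (auto simp: prob_space_measure_pmf)
  qed
  then have "AE w in PM. \<forall>k. w k \<in> idx" by (simp add: AE_all_countable)
  then show ?thesis by (simp add: seqs_def)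
qed

lemma measure_restrict_seqs: "A \<in> sets PM \<Longrightarrow> measure PM A = measure PM (A \<inter> seqs)"
  by (rule measure_eq_AE) (use AE_seqs sets_seqs in auto)

lemma meas_prefix: "(\<lambda>w. comp_prefix ff w k (0, 0)) \<in> borel_measurable PM"
proof -
  have mX: "(\<lambda>w. X w j) \<in> borel_measurable PM" for j
    unfolding X_def by (intro borel_measurable_prod meas_comp)
  have mY: "(\<lambda>w. Y w j) \<in> borel_measurable PM" for j
    unfolding Y_def by (intro borel_measurable_prod meas_comp)
  have "(\<lambda>w. ((\<Sum>j<k. X w j * tt1 (w j)) + X w k * 0, (\<Sum>j<k. Y w j * tt2 (w j)) + Y w k * 0))
      \<in> borel_measurable PM"
    by (intro borel_measurable_Pair borel_measurable_add borel_measurable_sum borel_measurable_times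
        mX mY meas_comp borel_measurable_const)
  then show ?thesis unfolding comp_prefix_eq by simp
qed

lemma meas_pt: "pt \<in> borel_measurable PM"
  by (rule borel_measurable_LIMSEQ_metric[OF meas_prefix]) (rule comp_prefix_lim_gen[of _ 0], simp)

lemma sets_pre: "A \<in> sets borel \<Longrightarrow> pt -` A \<in> sets PM"
  using measurable_sets[OF meas_pt] by simp

definition nu :: "(real \<times> real) measure" where "nu = distr PM borel pt"

lemma nu_eq: "bernoulli_proj ff (q_ex a1 e) = nu"
proof -
  have "coding ff = pt" by (rule ext) (simp add: coding_eq)
  then show ?thesis unfolding bernoulli_proj_def nu_def PM_def q_ex_eq P0_def by simp
qed

lemma measure_nu: "A \<in> sets borel \<Longrightarrow> measure nu A = measure PM {w \<in> seqs. pt w \<in> A}"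
proof -
  assume A: "A \<in> sets borel"
  have "measure nu A = measure PM (pt -` A)" unfolding nu_def
    by (subst measure_distr[OF meas_pt]) (use A in auto)
  also have "\<dots> = measure PM (pt -` A \<inter> seqs)" by (rule measure_restrict_seqs[OF sets_pre[OF A]])
  also have "pt -` A \<inter> seqs = {w \<in> seqs. pt w \<in> A}" by auto
  finally show ?thesis .
qed

lemma prob_nu: "prob_space nu" unfolding nu_def by (rule PMp.prob_space_distr[OF meas_pt])


lemma emeasure_nu: "emeasure nu A = ennreal (measure nu A)"
proof -
  interpret NU: prob_space nu by (rule prob_nu)
  show ?thesis by (rule NU.emeasure_eq_measure)
qed

end


context ex begin

definition colset :: "nat \<Rightarrow> nat set" where "colset i = {j \<in> idx. col j = col i}"
definition CS :: "(nat \<Rightarrow> nat) \<Rightarrow> nat \<Rightarrow> nat \<Rightarrow> nat set" where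
  "CS w0 a k = (if k < a then {w0 k} else colset (w0 k))"
definition Cyl :: "(nat \<Rightarrow> nat) \<Rightarrow> nat \<Rightarrow> nat \<Rightarrow> (nat \<Rightarrow> nat) set" where
  "Cyl w0 a b = {w. \<forall>k\<in>{..<b}. w k \<in> CS w0 a k}"
definition hh :: "nat \<Rightarrow> real" where "hh i = (if i = 2 then 1 else 1/2)"
definition H :: "(nat \<Rightarrow> nat) \<Rightarrow> nat \<Rightarrow> real" where "H w n = (\<Prod>k<n. hh (w k))"

lemma finite_colset: "finite (colset i)" by (simp add: colset_def idx_def)
lemma finite_CS: "finite (CS w0 a k)" by (simp add: CS_def finite_colset)
lemma sets_Cyl: "Cyl w0 a b \<in> sets PM" unfolding Cyl_def by (rule sets_cyl) simp

lemma qq_hh: "i \<in> idx \<Longrightarrow> qq i = l1 i powr s0 * hh i"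
  by (auto simp: idx_def qq_def hh_def lam1_ex_def)
lemma qq_colset: "i \<in> idx \<Longrightarrow> (\<Sum>j\<in>colset i. qq j) = l1 i powr s0"
proof -
  assume i: "i \<in> idx"
  show ?thesis
  proof (cases "i = 2")
    case True
    then have "colset i = {2}" by (auto simp: colset_def idx_def col_def)
    then show ?thesis using True by (simp add: qq_def lam1_ex_def)
  next
    case False
    then have "colset i = {1, 3}" using i by (auto simp: colset_def idx_def col_def)
    then show ?thesis using False by (simp add: qq_def lam1_ex_def)
  qed
qed

lemma prod_if_prefix: "(a::nat) \<le> b \<Longrightarrow> (\<Prod>k<b. if k < a then f k else (1::real)) = (\<Prod>k<a. f k)"
proof (induction b)
  case 0 then show ?case by simp
next
  case (Suc b)
  show ?case
  proof (cases "a \<le> b")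
    case True then show ?thesis using Suc by simp
  next
    case False
    then have "a = Suc b" using Suc by simp
    then show ?thesis by (intro prod.cong refl) auto
  qed
qed

lemma hh_pos: "0 < hh i" and hh_le1: "hh i \<le> 1" by (auto simp: hh_def)
lemma H_pos: "0 < H w n" unfolding H_def by (intro prod_pos) (simp add: hh_pos)
lemma H_Suc: "H w (Suc n) = H w n * hh (w n)" by (simp add: H_def)
lemma H_mono: "m \<le> n \<Longrightarrow> H w n \<le> H w m"
proof (induction n)
  case 0 then show ?case by simp
next
  case (Suc n)
  show ?case
  proof (cases "m \<le> n")
    case True
    have "H w (Suc n) \<le> H w n" unfolding H_Suc using H_pos[of w n] hh_le1 hh_pos
      by (simp add: mult_left_le)
    then show ?thesis using Suc True by linarith
  next
    case False then have "m = Suc n" using Suc by simp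
    then show ?thesis by simp
  qed
qed

lemma hh_ge: "l2 i powr tt \<le> hh i"
proof (cases "i = 2")
  case True
  have "(1/2::real) powr tt \<le> 1" using tt_pos by (intro powr_le1) auto
  then show ?thesis using True by (simp add: hh_def lam2_ex_def)
next
  case False then show ?thesis using mu_tt by (simp add: hh_def lam2_ex_def)
qed

lemma Y_powr_Suc: "Y w (Suc n) powr tt = Y w n powr tt * l2 (w n) powr tt"
  unfolding Y_Suc using Y_pos[of w n] l2_pos[of "w n"] by (simp add: powr_mult)

lemma H_ratio: "m \<le> n \<Longrightarrow> H w m * Y w n powr tt \<le> H w n * Y w m powr tt"
proof (induction n)
  case 0 then show ?case by simp
next
  case (Suc n)
  show ?case
  proof (cases "m \<le> n")
    case True
    have IH: "H w m * Y w n powr tt \<le> H w n * Y w m powr tt" using Suc True by simp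
    have "H w m * Y w (Suc n) powr tt = (H w m * Y w n powr tt) * l2 (w n) powr tt"
      unfolding Y_powr_Suc by simp
    also have "\<dots> \<le> (H w n * Y w m powr tt) * l2 (w n) powr tt"
      by (rule mult_right_mono[OF IH]) simp
    also have "\<dots> \<le> (H w n * Y w m powr tt) * hh (w n)"
      by (rule mult_left_mono[OF hh_ge]) (simp add: less_imp_le[OF H_pos])
    also have "\<dots> = H w (Suc n) * Y w m powr tt" by (simp add: H_Suc)
    finally show ?thesis .
  next
    case False then have "m = Suc n" using Suc by simp
    then show ?thesis by simp
  qed
qed

lemma cyl_meas:
  assumes w0: "w0 \<in> seqs" and ab: "a \<le> b"
  shows "measure PM (Cyl w0 a b) = X w0 b powr s0 * H w0 a"
proof -
  have wk: "w0 k \<in> idx" for k using w0 by (auto simp: seqs_def)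
  have "measure PM (Cyl w0 a b) = (\<Prod>k\<in>{..<b}. \<Sum>j\<in>CS w0 a k. qq j)"
    unfolding Cyl_def by (rule cyl_measure) (auto simp: finite_CS)
  also have "\<dots> = (\<Prod>k<b. l1 (w0 k) powr s0 * (if k < a then hh (w0 k) else 1))"
    by (intro prod.cong refl) (auto simp: CS_def qq_hh[OF wk] qq_colset[OF wk])
  also have "\<dots> = (\<Prod>k<b. l1 (w0 k) powr s0) * (\<Prod>k<b. if k < a then hh (w0 k) else 1)"
    by (rule prod.distrib)
  also have "(\<Prod>k<b. l1 (w0 k) powr s0) = X w0 b powr s0"
    unfolding X_def by (rule prod_powr_distrib[symmetric])
  also have "(\<Prod>k<b. if k < a then hh (w0 k) else 1) = H w0 a"
    unfolding H_def by (rule prod_if_prefix[OF ab])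
  finally show ?thesis .
qed

definition fb :: "(nat \<Rightarrow> real) \<Rightarrow> real \<Rightarrow> nat" where "fb g c = (LEAST n. g n < c)"

lemma fb_props:
  assumes "\<exists>n. g n < c"
  shows "g (fb g c) < c" "\<And>n. n < fb g c \<Longrightarrow> \<not> g n < c" "\<And>n. g n < c \<Longrightarrow> fb g c \<le> n"
  using assms unfolding fb_def by (auto intro: LeastI_ex Least_le dest: not_less_Least)

lemma ex_X: "0 < c \<Longrightarrow> \<exists>n. K * X w n < c"
proof -
  assume c: "0 < c"
  show ?thesis
  proof (cases "K \<le> 0")
    case True then show ?thesis using X_pos[of w 0] c by (intro exI[of _ 0]) (simp add: mult_nonpos_nonneg)
  next
    case False
    obtain n where n: "(2/3::real)^n < c / K" using real_arch_pow_inv[of "c/K" "2/3"] c False by auto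
    have "K * X w n \<le> K * (2/3)^n" using X_le False by simp
    also have "\<dots> < c" using n False by (simp add: field_simps)
    finally show ?thesis by blast
  qed
qed

lemma ex_Y: "0 < c \<Longrightarrow> \<exists>n. K * Y w n < c"
proof -
  assume c: "0 < c"
  show ?thesis
  proof (cases "K \<le> 0")
    case True then show ?thesis using Y_pos[of w 0] c by (intro exI[of _ 0]) (simp add: mult_nonpos_nonneg)
  next
    case False
    obtain n where n: "(1/2::real)^n < c / K" using real_arch_pow_inv[of "c/K" "1/2"] c False by auto
    have "K * Y w n \<le> K * (1/2)^n" using Y_le False by simp
    also have "\<dots> < c" using n False by (simp add: field_simps)
    finally show ?thesis by blast
  qed
qed

lemma ex_X1: "0 < c \<Longrightarrow> \<exists>n. X w n < c" using ex_X[of c 1] by simp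
lemma ex_Y1: "0 < c \<Longrightarrow> \<exists>n. Y w n < c" using ex_Y[of c 1] by simp

lemma ball_in_cyl:
  assumes w0: "w0 \<in> seqs" and w: "w \<in> seqs" and R: "0 < R"
    and d: "dist (pt w0) (pt w) < R"
  shows "w \<in> Cyl w0 (fb (\<lambda>n. e * Y w0 n) R) (fb (\<lambda>n. e * X w0 n) R)"
proof -
  define ia where "ia = fb (\<lambda>n. e * Y w0 n) R"
  define ib where "ib = fb (\<lambda>n. e * X w0 n) R"
  note fa = fb_props[OF ex_Y[OF R, of e w0], folded ia_def]
  note fbb = fb_props[OF ex_X[OF R, of e w0], folded ib_def]
  have let_agree: "\<forall>k<ia. w0 k = w k"
  proof (rule ccontr)
    assume "\<not> (\<forall>k<ia. w0 k = w k)"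
    then have "\<exists>k. k < ia \<and> w0 k \<noteq> w k" by auto
    then obtain j where j: "j < ia" "w0 j \<noteq> w j" "\<forall>m<j. \<not> (m < ia \<and> w0 m \<noteq> w m)"
      unfolding exists_least_iff[of "\<lambda>k. k < ia \<and> w0 k \<noteq> w k"] by blast
    have "e * Y w0 j \<le> dist (pt w0) (pt w)"
      by (rule sep_letter[OF w0 w _ j(2)]) (use j in auto)
    then have "e * Y w0 j < R" using d by linarith
    then show False using fa(2)[OF j(1)] by simp
  qed
  have col_agree: "\<forall>k<ib. col (w0 k) = col (w k)"
  proof (rule ccontr)
    assume "\<not> (\<forall>k<ib. col (w0 k) = col (w k))"
    then have "\<exists>k. k < ib \<and> col (w0 k) \<noteq> col (w k)" by auto
    then obtain j where j: "j < ib" "col (w0 j) \<noteq> col (w j)" "\<forall>m<j. \<not> (m < ib \<and> col (w0 m) \<noteq> col (w m))"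
      unfolding exists_least_iff[of "\<lambda>k. k < ib \<and> col (w0 k) \<noteq> col (w k)"] by blast
    have "e * X w0 j \<le> dist (pt w0) (pt w)"
      by (rule sep_col[OF w0 w _ j(2)]) (use j in auto)
    then have "e * X w0 j < R" using d by linarith
    then show False using fbb(2)[OF j(1)] by simp
  qed
  have "w k \<in> CS w0 ia k" if "k < ib" for k
  proof (cases "k < ia")
    case True then show ?thesis using let_agree by (simp add: CS_def)
  next
    case False
    have "w k \<in> idx" using w by (auto simp: seqs_def)
    then show ?thesis using False col_agree that by (auto simp: CS_def colset_def)
  qed
  then show ?thesis unfolding Cyl_def ia_def[symmetric] ib_def[symmetric] by auto
qed

lemma ia_le_ib:
  assumes R: "0 < R"
  shows "fb (\<lambda>n. e * Y w0 n) R \<le> fb (\<lambda>n. e * X w0 n) R"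
proof -
  note fbb = fb_props[OF ex_X[OF R, of e w0]]
  have "e * Y w0 (fb (\<lambda>n. e * X w0 n) R) < R"
    using fbb(1) YX[of w0 "fb (\<lambda>n. e * X w0 n) R"] e_pos
    by (smt (verit) mult_left_mono)
  then show ?thesis by (rule fb_props(3)[OF ex_Y[OF R, of e w0]])
qed

lemma cyl_in_ball:
  assumes w: "w \<in> Cyl w0 a b" and ab: "a \<le> b"
  shows "dist (pt w0) (pt w) \<le> X w0 b + Y w0 a"
proof (rule prox)
  fix k assume k: "k < a"
  then have "w k \<in> CS w0 a k" using w ab by (auto simp: Cyl_def)
  then show "w0 k = w k" using k by (simp add: CS_def)
next
  fix k assume k: "k < b"
  then have "w k \<in> CS w0 a k" using w by (auto simp: Cyl_def)
  then show "col (w0 k) = col (w k)" by (auto simp: CS_def colset_def split: if_splits)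
qed

lemma ja_le_jb:
  assumes r: "0 < r"
  shows "fb (\<lambda>n. Y w0 n) r \<le> fb (\<lambda>n. X w0 n) r"
proof -
  note fbb = fb_props[OF ex_X1[OF r, of w0]]
  have "Y w0 (fb (\<lambda>n. X w0 n) r) < r" using fbb(1) YX[of w0 "fb (\<lambda>n. X w0 n) r"] by linarith
  then show ?thesis by (rule fb_props(3)[OF ex_Y1[OF r, of w0]])
qed

end


context ex begin

interpretation PMp: prob_space PM by (rule prob_PM)

definition D :: real where "D = s0 + tt"
lemma D_pos: "0 < D" unfolding D_def using s0_pos tt_pos by simp

lemma set_ball_eq: "{w \<in> seqs. pt w \<in> ball x R} \<in> sets PM"
proof -
  have "{w \<in> seqs. pt w \<in> ball x R} = pt -` ball x R \<inter> seqs" by auto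
  then show ?thesis using sets_pre[of "ball x R"] sets_seqs by auto
qed

lemma nu_ball_upper:
  assumes w0: "w0 \<in> seqs" and R: "0 < R"
  shows "measure nu (ball (pt w0) R) \<le>
    X w0 (fb (\<lambda>n. e * X w0 n) R) powr s0 * H w0 (fb (\<lambda>n. e * Y w0 n) R)"
proof -
  have "measure nu (ball (pt w0) R) = measure PM {w \<in> seqs. pt w \<in> ball (pt w0) R}"
    by (rule measure_nu) simp
  also have "\<dots> \<le> measure PM (Cyl w0 (fb (\<lambda>n. e * Y w0 n) R) (fb (\<lambda>n. e * X w0 n) R))"
    by (rule PMp.finite_measure_mono[OF _ sets_Cyl]) (use ball_in_cyl[OF w0 _ R] in auto)
  also have "\<dots> = X w0 (fb (\<lambda>n. e * X w0 n) R) powr s0 * H w0 (fb (\<lambda>n. e * Y w0 n) R)"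
    by (rule cyl_meas[OF w0 ia_le_ib[OF R]])
  finally show ?thesis .
qed

lemma nu_ball_lower:
  assumes w0: "w0 \<in> seqs" and r: "0 < r"
  shows "X w0 (fb (\<lambda>n. X w0 n) (r/3)) powr s0 * H w0 (fb (\<lambda>n. Y w0 n) (r/3))
    \<le> measure nu (ball (pt w0) r)"
proof -
  define ja where "ja = fb (\<lambda>n. Y w0 n) (r/3)"
  define jb where "jb = fb (\<lambda>n. X w0 n) (r/3)"
  have r3: "0 < r/3" using r by simp
  have jab: "ja \<le> jb" unfolding ja_def jb_def by (rule ja_le_jb[OF r3])
  have Xb: "X w0 jb < r/3" unfolding jb_def by (rule fb_props(1)[OF ex_X1[OF r3]])
  have Ya: "Y w0 ja < r/3" unfolding ja_def by (rule fb_props(1)[OF ex_Y1[OF r3]])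
  have "X w0 jb powr s0 * H w0 ja = measure PM (Cyl w0 ja jb)" by (rule cyl_meas[OF w0 jab, symmetric])
  also have "\<dots> = measure PM (Cyl w0 ja jb \<inter> seqs)" by (rule measure_restrict_seqs[OF sets_Cyl])
  also have "\<dots> \<le> measure PM {w \<in> seqs. pt w \<in> ball (pt w0) r}"
  proof (rule PMp.finite_measure_mono[OF _ set_ball_eq])
    show "Cyl w0 ja jb \<inter> seqs \<subseteq> {w \<in> seqs. pt w \<in> ball (pt w0) r}"
    proof
      fix w assume w: "w \<in> Cyl w0 ja jb \<inter> seqs"
      have "dist (pt w0) (pt w) \<le> X w0 jb + Y w0 ja" using w by (intro cyl_in_ball[OF _ jab]) auto
      then have "dist (pt w0) (pt w) < r" using Xb Ya r by linarith
      then show "w \<in> {w \<in> seqs. pt w \<in> ball (pt w0) r}" using w by auto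
    qed
  qed
  also have "\<dots> = measure nu (ball (pt w0) r)" by (rule measure_nu[symmetric]) simp
  finally show ?thesis unfolding ja_def jb_def .
qed

lemma nu_ball_pos: "w0 \<in> seqs \<Longrightarrow> 0 < r \<Longrightarrow> 0 < measure nu (ball (pt w0) r)"
  using nu_ball_lower[of w0 r] X_pos H_pos
  by (smt (verit) mult_pos_pos powr_gt_zero)

lemma nu_le1: "measure nu A \<le> 1"
proof -
  interpret NU: prob_space nu by (rule prob_nu)
  show ?thesis by (rule NU.prob_le_1)
qed

lemma lemma_K:
  assumes w0: "w0 \<in> seqs" and r: "0 < r" and rR: "r < R"
  shows "measure nu (ball (pt w0) R) \<le> (24/e) powr D * (R/r) powr D * measure nu (ball (pt w0) r)"
proof -
  have R: "0 < R" using r rR by simp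
  have C1: "1 \<le> (24/e) powr D" using e_pos e_small D_pos by (intro ge_one_powr_ge_zero) auto
  have rho1: "1 \<le> (R/r) powr D" using r rR D_pos by (intro ge_one_powr_ge_zero) auto
  show ?thesis
  proof (cases "3 < r")
    case True
    have r3: "0 < r/3" using r by simp
    have ja0: "fb (\<lambda>n. Y w0 n) (r/3) = 0" using fb_props(3)[OF ex_Y1[OF r3, of w0], of 0] True by simp
    have jb0: "fb (\<lambda>n. X w0 n) (r/3) = 0" using fb_props(3)[OF ex_X1[OF r3, of w0], of 0] True by simp
    have "1 \<le> measure nu (ball (pt w0) r)" using nu_ball_lower[OF w0 r] by (simp add: ja0 jb0 H_def)
    moreover have "measure nu (ball (pt w0) R) \<le> 1" by (rule nu_le1)
    moreover have "1 \<le> (24/e) powr D * (R/r) powr D" using C1 rho1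
      by (metis mult_mono' mult_1 zero_le_one)
    ultimately show ?thesis
      by (smt (verit, best) mult_le_cancel_left1 mult.commute)
  next
    case False
    then have r3: "r \<le> 3" by simp
    define ia where "ia = fb (\<lambda>n. e * Y w0 n) R"
    define ib where "ib = fb (\<lambda>n. e * X w0 n) R"
    define ja where "ja = fb (\<lambda>n. Y w0 n) (r/3)"
    define jb where "jb = fb (\<lambda>n. X w0 n) (r/3)"
    define K where "K = 24 / e * (R / r)"
    have Kpos: "0 < K" unfolding K_def using e_pos r R by simp
    have rr3: "0 < r/3" using r by simp
    note fia = fb_props[OF ex_Y[OF R, of e w0], folded ia_def]
    note fib = fb_props[OF ex_X[OF R, of e w0], folded ib_def]
    note fja = fb_props[OF ex_Y1[OF rr3, of w0], folded ja_def]
    note fjb = fb_props[OF ex_X1[OF rr3, of w0], folded jb_def]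
    have ja1: "ja \<noteq> 0" using fja(1) r3 by (cases ja) auto
    have jb1: "jb \<noteq> 0" using fjb(1) r3 by (cases jb) auto
    have Yja: "r/24 \<le> Y w0 ja"
    proof -
      obtain m where m: "ja = Suc m" using ja1 by (cases ja) auto
      have "r/3 \<le> Y w0 m" using fja(2)[of m] m by simp
      moreover have "1/8 \<le> l2 (w0 m)" by (rule l2_ge)
      ultimately have "r/3 * (1/8) \<le> Y w0 m * l2 (w0 m)" using r by (intro mult_mono) auto
      then show ?thesis using m by (simp add: Y_Suc)
    qed
    have Xjb: "r/24 \<le> X w0 jb"
    proof -
      obtain m where m: "jb = Suc m" using jb1 by (cases jb) auto
      have "r/3 \<le> X w0 m" using fjb(2)[of m] m by simp
      moreover have "1/8 \<le> l1 (w0 m)" using l1_ge[of "w0 m"] by simp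
      ultimately have "r/3 * (1/8) \<le> X w0 m * l1 (w0 m)" using r by (intro mult_mono) auto
      then show ?thesis using m by (simp add: X_Suc)
    qed
    have Yia: "Y w0 ia \<le> K * Y w0 ja"
    proof -
      have "Y w0 ia < R / e" using fia(1) e_pos by (simp add: field_simps)
      also have "R / e = K * (r/24)" unfolding K_def using r by (simp add: field_simps)
      also have "\<dots> \<le> K * Y w0 ja" using Yja Kpos by simp
      finally show ?thesis by simp
    qed
    have Xib: "X w0 ib \<le> K * X w0 jb"
    proof -
      have "X w0 ib < R / e" using fib(1) e_pos by (simp add: field_simps)
      also have "R / e = K * (r/24)" unfolding K_def using r by (simp add: field_simps)
      also have "\<dots> \<le> K * X w0 jb" using Xjb Kpos by simp
      finally show ?thesis by simp
    qed
    have iaja: "ia \<le> ja"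
    proof -
      have "e * Y w0 ja < R"
      proof -
        have "e * Y w0 ja \<le> 1 * Y w0 ja" using e_small Y_pos[of w0 ja] by (intro mult_right_mono) auto
        also have "\<dots> < r/3" using fja(1) by simp
        finally show ?thesis using rR r by simp
      qed
      then show ?thesis unfolding ia_def by (rule fb_props(3)[OF ex_Y[OF R]])
    qed
    have step1: "X w0 ib powr s0 \<le> K powr s0 * X w0 jb powr s0"
    proof -
      have "X w0 ib powr s0 \<le> (K * X w0 jb) powr s0"
        using Xib X_pos s0_pos by (intro powr_mono2) (auto intro: less_imp_le)
      also have "\<dots> = K powr s0 * X w0 jb powr s0" using Kpos X_pos[of w0 jb] by (simp add: powr_mult)
      finally show ?thesis .
    qed
    have step2: "H w0 ia \<le> K powr tt * H w0 ja"
    proof -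
      have hr: "H w0 ia * Y w0 ja powr tt \<le> H w0 ja * Y w0 ia powr tt" by (rule H_ratio[OF iaja])
      have "Y w0 ia powr tt \<le> (K * Y w0 ja) powr tt"
        using Yia Y_pos tt_pos by (intro powr_mono2) (auto intro: less_imp_le)
      also have "\<dots> = K powr tt * Y w0 ja powr tt" using Kpos Y_pos[of w0 ja] by (simp add: powr_mult)
      finally have "H w0 ia * Y w0 ja powr tt \<le> (K powr tt * H w0 ja) * Y w0 ja powr tt"
        using hr H_pos[of w0 ja] by (smt (verit) mult.assoc mult.commute mult_left_mono)
      then show ?thesis using Y_pos[of w0 ja] by (simp add: mult_le_cancel_right)
    qed
    have "measure nu (ball (pt w0) R) \<le> X w0 ib powr s0 * H w0 ia"
      unfolding ia_def ib_def by (rule nu_ball_upper[OF w0 R])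
    also have "\<dots> \<le> (K powr s0 * X w0 jb powr s0) * (K powr tt * H w0 ja)"
      using step1 step2 H_pos[of w0 ia] by (intro mult_mono) auto
    also have "\<dots> = K powr D * (X w0 jb powr s0 * H w0 ja)"
      unfolding D_def by (simp add: powr_add algebra_simps)
    also have "\<dots> \<le> K powr D * measure nu (ball (pt w0) r)"
      using nu_ball_lower[OF w0 r, folded ja_def jb_def] by (intro mult_left_mono) auto
    also have "K powr D = (24/e) powr D * (R/r) powr D"
      unfolding K_def by (rule powr_mult)
    finally show ?thesis .
  qed
qed

end


lemma Inf_ereal_eqI:
  assumes "D \<in> S" "\<And>s. s \<in> S \<Longrightarrow> D \<le> s"
  shows "Inf (ereal ` S) = ereal D"
proof (rule antisym)
  show "Inf (ereal ` S) \<le> ereal D" using assms(1) by (intro Inf_lower) auto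
  show "ereal D \<le> Inf (ereal ` S)" using assms(2) by (intro Inf_greatest) auto
qed

context ex begin

interpretation PMp: prob_space PM by (rule prob_PM)

definition one :: "nat \<Rightarrow> nat" where "one = (\<lambda>_. 1)"
lemma one_seqs: "one \<in> seqs" by (simp add: one_def seqs_def idx_def)
lemma X_one: "X one n = lA ^ n" by (simp add: X_def one_def lam1_ex_def)
lemma Y_one: "Y one n = mu ^ n" by (simp add: Y_def one_def lam2_ex_def)
lemma H_one: "H one n = Y one n powr tt"
proof (induction n)
  case 0 then show ?case by (simp add: H_def)
next
  case (Suc n)
  have "hh (one n) = l2 (one n) powr tt" using mu_tt by (simp add: one_def hh_def lam2_ex_def)
  then show ?case by (simp add: H_Suc Y_powr_Suc Suc)
qed

lemma nu_ball_one_upper: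
  assumes r: "0 < r"
  shows "measure nu (ball (pt one) r) \<le> (r / e) powr D"
proof -
  define ia where "ia = fb (\<lambda>n. e * Y one n) r"
  define ib where "ib = fb (\<lambda>n. e * X one n) r"
  note fia = fb_props[OF ex_Y[OF r, of e one], folded ia_def]
  note fib = fb_props[OF ex_X[OF r, of e one], folded ib_def]
  have Xb: "X one ib < r / e" using fib(1) e_pos by (simp add: field_simps)
  have Ya: "Y one ia < r / e" using fia(1) e_pos by (simp add: field_simps)
  have "measure nu (ball (pt one) r) \<le> X one ib powr s0 * H one ia"
    unfolding ia_def ib_def by (rule nu_ball_upper[OF one_seqs r])
  also have "\<dots> = X one ib powr s0 * Y one ia powr tt" by (simp add: H_one)
  also have "\<dots> \<le> (r / e) powr s0 * (r / e) powr tt"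
    using Xb Ya X_pos Y_pos s0_pos tt_pos
    by (intro mult_mono powr_mono2) (auto intro: less_imp_le)
  also have "\<dots> = (r / e) powr D" by (simp add: D_def powr_add)
  finally show ?thesis .
qed

lemma nu_ball_one_lower:
  assumes r: "0 < r" "r \<le> 3"
  shows "(r / 24) powr D \<le> measure nu (ball (pt one) r)"
proof -
  define ja where "ja = fb (\<lambda>n. Y one n) (r/3)"
  define jb where "jb = fb (\<lambda>n. X one n) (r/3)"
  have rr3: "0 < r/3" using r by simp
  note fja = fb_props[OF ex_Y1[OF rr3, of one], folded ja_def]
  note fjb = fb_props[OF ex_X1[OF rr3, of one], folded jb_def]
  have ja1: "ja \<noteq> 0" using fja(1) r by (cases ja) auto
  have jb1: "jb \<noteq> 0" using fjb(1) r by (cases jb) auto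
  have Yja: "r/24 \<le> Y one ja"
  proof -
    obtain m where m: "ja = Suc m" using ja1 by (cases ja) auto
    have "r/3 \<le> Y one m" using fja(2)[of m] m by simp
    moreover have "1/8 \<le> l2 (one m)" by (rule l2_ge)
    ultimately have "r/3 * (1/8) \<le> Y one m * l2 (one m)" using r by (intro mult_mono) auto
    then show ?thesis using m by (simp add: Y_Suc)
  qed
  have Xjb: "r/24 \<le> X one jb"
  proof -
    obtain m where m: "jb = Suc m" using jb1 by (cases jb) auto
    have "r/3 \<le> X one m" using fjb(2)[of m] m by simp
    moreover have "1/8 \<le> l1 (one m)" using l1_ge[of "one m"] by simp
    ultimately have "r/3 * (1/8) \<le> X one m * l1 (one m)" using r by (intro mult_mono) auto
    then show ?thesis using m by (simp add: X_Suc)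
  qed
  have "(r / 24) powr D = (r/24) powr s0 * (r/24) powr tt" by (simp add: D_def powr_add)
  also have "\<dots> \<le> X one jb powr s0 * Y one ja powr tt"
    using Xjb Yja r s0_pos tt_pos by (intro mult_mono powr_mono2) auto
  also have "\<dots> = X one jb powr s0 * H one ja" by (simp add: H_one)
  also have "\<dots> \<le> measure nu (ball (pt one) r)"
    unfolding ja_def jb_def by (rule nu_ball_lower[OF one_seqs r(1)])
  finally show ?thesis .
qed

lemma pt_three_dist: "e \<le> dist (pt one) (pt (\<lambda>_. 3))"
proof -
  have "e * Y one 0 \<le> dist (pt one) (pt (\<lambda>_. 3))"
    by (rule sep_letter) (auto simp: one_def seqs_def idx_def)
  then show ?thesis by simp
qed

end

locale exF = ex +
  fixes F :: "(real \<times> real) set"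
  assumes F_compact: "compact F" and F_ne: "F \<noteq> {}" and F_eq: "F = (\<Union>i\<in>idx. ff i ` F)"
begin

interpretation PMp: prob_space PM by (rule prob_PM)

lemma F_pt: "F = pt ` seqs"
proof
  show "F \<subseteq> pt ` seqs" using attractor_coded[OF F_compact F_eq] by blast
  show "pt ` seqs \<subseteq> F" using coded_in_attractor[OF F_compact F_ne F_eq] by blast
qed

lemma F_closed: "closed F" using F_compact by (rule compact_imp_closed)
lemma F_bounded: "bounded F" using F_compact by (rule compact_imp_bounded)

lemma msupp_nu: "msupp nu = F"
proof
  show "F \<subseteq> msupp nu"
  proof
    fix x assume "x \<in> F"
    then obtain w0 where w0: "w0 \<in> seqs" "x = pt w0" using F_pt by auto
    show "x \<in> msupp nu" unfolding msupp_def
      using nu_ball_pos[OF w0(1)] w0(2) by (auto simp: emeasure_nu)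
  qed
  show "msupp nu \<subseteq> F"
  proof
    fix x assume x: "x \<in> msupp nu"
    show "x \<in> F"
    proof (rule ccontr)
      assume nx: "x \<notin> F"
      have "open (- F)" using F_closed by (simp add: closed_def)
      then obtain r where r0: "0 < r" "ball x r \<subseteq> - F" using nx open_contains_ball by blast
      then have r: "0 < r" "ball x r \<inter> F = {}" by auto
      have "{w \<in> seqs. pt w \<in> ball x r} = {}" using r(2) F_pt by auto
      moreover have "measure nu (ball x r) = measure PM {w \<in> seqs. pt w \<in> ball x r}"
        by (rule measure_nu) simp
      ultimately have "measure nu (ball x r) = measure PM {}" by (simp only:)
      then have "measure nu (ball x r) = 0" by simp
      then have "emeasure nu (ball x r) = 0" by (simp add: emeasure_nu)
      then show False using x r(1) unfolding msupp_def by auto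
    qed
  qed
qed

lemma diam_F: "e \<le> diameter F"
proof -
  have "pt one \<in> F" "pt (\<lambda>_. 3) \<in> F" using F_pt one_seqs by (auto simp: seqs_def idx_def)
  then have "dist (pt one) (pt (\<lambda>_. 3)) \<le> diameter F" by (intro diameter_bounded_bound F_bounded)
  then show ?thesis using pt_three_dist by linarith
qed

lemma measure_dim: "assouad_dim_measure nu = ereal D"
  unfolding assouad_dim_measure_def msupp_nu
proof (rule Inf_ereal_eqI)
  let ?C = "(24/e) powr D"
  show "D \<in> {s. 0 \<le> s \<and> (\<exists>C>0. \<forall>x\<in>F. \<forall>r R. 0 < r \<and> r < R \<and> R < diameter F \<longrightarrow>
      measure nu (ball x R) / measure nu (ball x r) \<le> C * (R / r) powr s)}"
  proof (intro CollectI conjI exI[of _ ?C] ballI allI impI)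
    show "0 \<le> D" using D_pos by simp
    show "0 < ?C" using e_pos by simp
    fix x r R assume x: "x \<in> F" and rR: "0 < r \<and> r < R \<and> R < diameter F"
    obtain w0 where w0: "w0 \<in> seqs" "x = pt w0" using x F_pt by auto
    have pos: "0 < measure nu (ball x r)" using nu_ball_pos[OF w0(1)] rR w0(2) by simp
    have "measure nu (ball x R) \<le> ?C * (R/r) powr D * measure nu (ball x r)"
      using lemma_K[OF w0(1)] rR w0(2) by simp
    then show "measure nu (ball x R) / measure nu (ball x r) \<le> ?C * (R / r) powr D"
      using pos by (simp add: divide_le_eq)
  qed
next
  fix s assume "s \<in> {s. 0 \<le> s \<and> (\<exists>C>0. \<forall>x\<in>F. \<forall>r R. 0 < r \<and> r < R \<and> R < diameter F \<longrightarrow>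
      measure nu (ball x R) / measure nu (ball x r) \<le> C * (R / r) powr s)}"
  then obtain C where s: "0 \<le> s" and C: "0 < C" and
    bd: "\<And>x r R. x \<in> F \<Longrightarrow> 0 < r \<Longrightarrow> r < R \<Longrightarrow> R < diameter F \<Longrightarrow>
      measure nu (ball x R) / measure nu (ball x r) \<le> C * (R / r) powr s" by blast
  show "D \<le> s"
  proof (rule ccontr)
    assume "\<not> D \<le> s"
    then have Ds: "0 < D - s" by simp
    define R0 where "R0 = e / 2"
    have R0: "0 < R0" "R0 \<le> 3" "R0 < diameter F" using e_pos e_small diam_F by (auto simp: R0_def)
    have x0: "pt one \<in> F" using F_pt one_seqs by auto
    define L where "L = (R0 / 24) powr D"
    have L: "0 < L" using R0 by (simp add: L_def)
    define eps where "eps = L / (2 * C * R0 powr s * (1/e) powr D)"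
    have eps: "0 < eps" using L C R0 e_pos by (simp add: eps_def)
    define r where "r = min (R0 / 2) (eps powr (1 / (D - s)))"
    have r: "0 < r" "r < R0" using R0 eps by (auto simp: r_def)
    have rpow: "r powr (D - s) \<le> eps"
    proof -
      have "r powr (D - s) \<le> (eps powr (1 / (D - s))) powr (D - s)"
        using r Ds by (intro powr_mono2) (auto simp: r_def)
      also have "\<dots> = eps" using Ds eps by (simp add: powr_powr)
      finally show ?thesis .
    qed
    have num: "L \<le> measure nu (ball (pt one) R0)" unfolding L_def by (rule nu_ball_one_lower[OF R0(1,2)])
    have den: "measure nu (ball (pt one) r) \<le> (r / e) powr D" by (rule nu_ball_one_upper[OF r(1)])
    have denpos: "0 < measure nu (ball (pt one) r)" using nu_ball_pos[OF one_seqs r(1)] .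
    have "L / (r / e) powr D \<le> measure nu (ball (pt one) R0) / measure nu (ball (pt one) r)"
      using num den denpos L by (intro frac_le) auto
    also have "\<dots> \<le> C * (R0 / r) powr s" by (rule bd[OF x0 r(1) r(2) R0(3)])
    finally have ineq: "L / (r / e) powr D \<le> C * (R0 / r) powr s" .
    have "L \<le> C * (R0 / r) powr s * (r / e) powr D"
      using ineq r e_pos by (simp add: divide_le_eq)
    also have "C * (R0 / r) powr s * (r / e) powr D = C * R0 powr s * (1/e) powr D * r powr (D - s)"
      using r R0 e_pos by (simp add: powr_divide powr_diff powr_mult field_simps)
    also have "\<dots> \<le> C * R0 powr s * (1/e) powr D * eps"
      using rpow C R0 e_pos by (intro mult_left_mono) auto
    also have "\<dots> = L / 2" using C R0 e_pos by (simp add: eps_def field_simps)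
    finally show False using L by simp
  qed
qed

end


context exF begin

interpretation PMp: prob_space PM by (rule prob_PM)
interpretation NU: prob_space nu by (rule prob_nu)

lemma sets_nu[simp]: "sets nu = sets borel" by (simp add: nu_def)
lemma ball_nu[simp]: "ball y \<rho> \<in> sets nu" by simp

lemma cover_exists:
  assumes "E \<subseteq> F" "0 < r"
  shows "\<exists>C. finite C \<and> E \<subseteq> (\<Union>c\<in>C. cball c r)"
proof -
  have "F \<subseteq> (\<Union>c\<in>F. ball c r)" using assms(2) by auto
  then obtain C' where "C' \<subseteq> F" "finite C'" "F \<subseteq> (\<Union>c\<in>C'. ball c r)"
    using compactE_image[OF F_compact, of F "\<lambda>c. ball c r"] by auto
  then show ?thesis using assms(1) ball_subset_cball by (intro exI[of _ C']) blast
qed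

lemma cover_num_le:
  assumes "finite P" "E \<subseteq> (\<Union>p\<in>P. cball p r)"
  shows "cover_num E r \<le> card P"
  unfolding cover_num_def by (rule Least_le) (use assms in blast)

lemma cover_num_ex:
  assumes "E \<subseteq> F" "0 < r"
  shows "\<exists>C. finite C \<and> card C = cover_num E r \<and> E \<subseteq> (\<Union>c\<in>C. cball c r)"
proof -
  obtain C where "finite C" "E \<subseteq> (\<Union>c\<in>C. cball c r)" using cover_exists[OF assms] by blast
  then have ex: "\<exists>n C. finite C \<and> card C = n \<and> E \<subseteq> (\<Union>c\<in>C. cball c r)" by blast
  show ?thesis unfolding cover_num_def by (rule LeastI_ex[OF ex])
qed

abbreviation "C0 \<equiv> (24/e) powr D"

lemma packing:
  assumes x: "x \<in> F" and r: "0 < r" and rR: "r < R"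
    and P: "finite P" "P \<subseteq> ball x R \<inter> F" and sep: "\<And>p q. p \<in> P \<Longrightarrow> q \<in> P \<Longrightarrow> p \<noteq> q \<Longrightarrow> r < dist p q"
  shows "real (card P) \<le> C0 * C0 * 8 powr D * (R / r) powr D"
proof -
  have R: "0 < R" using r rR by simp
  obtain w0 where w0: "w0 \<in> seqs" "x = pt w0" using x F_pt by auto
  define mR where "mR = measure nu (ball x R)"
  have mR: "0 < mR" unfolding mR_def using nu_ball_pos[OF w0(1) R] w0(2) by simp
  have C0: "0 < C0" using e_pos by simp
  define K where "K = C0 * (4 * R / r) powr D"
  have K: "0 < K" unfolding K_def using C0 r R by simp
  have lowp: "mR / K \<le> measure nu (ball p (r/2))" if p: "p \<in> P" for p
  proof -
    have pF: "p \<in> F" and pd: "dist x p < R" using P p by auto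
    obtain wp where wp: "wp \<in> seqs" "p = pt wp" using pF F_pt by auto
    have "ball x R \<subseteq> ball p (2 * R)"
    proof
      fix y assume "y \<in> ball x R"
      then have "dist x y < R" by simp
      moreover have "dist p y \<le> dist p x + dist x y" by (rule dist_triangle)
      moreover have "dist p x < R" using pd by (simp add: dist_commute)
      ultimately show "y \<in> ball p (2 * R)" by simp
    qed
    then have "mR \<le> measure nu (ball p (2 * R))" unfolding mR_def
      by (intro NU.finite_measure_mono ball_nu)
    also have "\<dots> \<le> C0 * ((2 * R) / (r/2)) powr D * measure nu (ball p (r/2))"
      using lemma_K[OF wp(1), of "r/2" "2 * R"] wp(2) r rR by simp
    also have "(2 * R) / (r/2) = 4 * R / r" by simp
    finally have "mR \<le> K * measure nu (ball p (r/2))" unfolding K_def by simp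
    then show ?thesis using K by (simp add: divide_le_eq mult.commute)
  qed
  have disj: "disjoint_family_on (\<lambda>p. ball p (r/2)) P"
    unfolding disjoint_family_on_def
  proof (intro ballI impI)
    fix p q assume "p \<in> P" "q \<in> P" "p \<noteq> q"
    then have "r < dist p q" by (rule sep)
    then show "ball p (r/2) \<inter> ball q (r/2) = {}"
      by (auto simp: dist_commute) (smt (verit) dist_commute dist_triangle)
  qed
  have sub: "(\<Union>p\<in>P. ball p (r/2)) \<subseteq> ball x (2 * R)"
  proof
    fix y assume "y \<in> (\<Union>p\<in>P. ball p (r/2))"
    then obtain p where p: "p \<in> P" "dist p y < r/2" by auto
    have "dist x p < R" using P p(1) by auto
    then have "dist x y < 2 * R" using p(2) rR r dist_triangle[of x y p] by linarith
    then show "y \<in> ball x (2 * R)" by simp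
  qed
  have "real (card P) * (mR / K) = (\<Sum>p\<in>P. mR / K)" by simp
  also have "\<dots> \<le> (\<Sum>p\<in>P. measure nu (ball p (r/2)))" by (rule sum_mono) (rule lowp)
  also have "\<dots> = measure nu (\<Union>p\<in>P. ball p (r/2))"
    by (rule NU.finite_measure_finite_Union[symmetric]) (use P disj in auto)
  also have "\<dots> \<le> measure nu (ball x (2 * R))" by (rule NU.finite_measure_mono[OF sub]) simp
  also have "\<dots> \<le> C0 * ((2 * R) / R) powr D * mR"
    unfolding mR_def using lemma_K[OF w0(1), of R "2 * R"] w0(2) R by simp
  also have "\<dots> = C0 * 2 powr D * mR" using R by simp
  finally have "real (card P) * (mR / K) \<le> C0 * 2 powr D * mR" .
  then have "real (card P) * mR \<le> C0 * 2 powr D * mR * K" using K by (simp add: field_simps)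
  then have "real (card P) \<le> C0 * 2 powr D * K" using mR by (simp add: mult.commute mult.left_commute)
  also have "C0 * 2 powr D * K = C0 * C0 * (2 powr D * 4 powr D) * (R / r) powr D"
    unfolding K_def using r R by (simp add: powr_mult[symmetric] mult.commute mult.left_commute)
  also have "2 powr D * 4 powr D = 8 powr D" by (simp add: powr_mult[symmetric])
  finally show ?thesis by simp
qed

lemma cover_upper:
  assumes x: "x \<in> F" and r: "0 < r" and rR: "r < R"
  shows "real (cover_num (ball x R \<inter> F) r) \<le> C0 * C0 * 8 powr D * (R / r) powr D"
proof -
  let ?E = "ball x R \<inter> F"
  let ?M = "C0 * C0 * 8 powr D * (R / r) powr D"
  define S where "S = {P. finite P \<and> P \<subseteq> ?E \<and> (\<forall>p\<in>P. \<forall>q\<in>P. p \<noteq> q \<longrightarrow> r < dist p q)}"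
  have bnd: "\<forall>P. P \<in> S \<longrightarrow> card P < nat (ceiling ?M) + 1"
  proof (intro allI impI)
    fix P assume "P \<in> S"
    then have "real (card P) \<le> ?M" unfolding S_def by (intro packing[OF x r rR]) auto
    then show "card P < nat (ceiling ?M) + 1" by linarith
  qed
  have "{} \<in> S" by (simp add: S_def)
  then obtain P where P: "P \<in> S" and maxP: "\<And>P'. P' \<in> S \<Longrightarrow> card P' \<le> card P"
    using ex_has_greatest_nat[of "\<lambda>P. P \<in> S" "{}" card "nat (ceiling ?M) + 1"] bnd by blast
  have cov: "?E \<subseteq> (\<Union>p\<in>P. cball p r)"
  proof
    fix y assume y: "y \<in> ?E"
    show "y \<in> (\<Union>p\<in>P. cball p r)"
    proof (rule ccontr)
      assume "y \<notin> (\<Union>p\<in>P. cball p r)"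
      then have far: "\<forall>p\<in>P. r < dist p y" by (auto simp: not_le)
      then have yP: "y \<notin> P" using r by auto
      have "insert y P \<in> S" using P y far unfolding S_def by (auto simp: dist_commute)
      then have "card (insert y P) \<le> card P" by (rule maxP)
      moreover have "card (insert y P) = Suc (card P)" using P yP by (simp add: S_def)
      ultimately show False by simp
    qed
  qed
  have fin: "finite P" using P by (simp add: S_def)
  have "cover_num ?E r \<le> card P" by (rule cover_num_le[OF fin cov])
  moreover have "real (card P) \<le> ?M" using P unfolding S_def by (intro packing[OF x r rR]) auto
  ultimately show ?thesis by linarith
qed

end


context exF begin

interpretation PMp: prob_space PM by (rule prob_PM)

lemma cyl_one_lower:
  assumes r: "0 < r" "r \<le> 3"
  shows "(r / 24) powr D \<le> measure PM (Cyl one (fb (\<lambda>n. Y one n) (r/3)) (fb (\<lambda>n. X one n) (r/3)))"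
proof -
  define ja where "ja = fb (\<lambda>n. Y one n) (r/3)"
  define jb where "jb = fb (\<lambda>n. X one n) (r/3)"
  have rr3: "0 < r/3" using r by simp
  note fja = fb_props[OF ex_Y1[OF rr3, of one], folded ja_def]
  note fjb = fb_props[OF ex_X1[OF rr3, of one], folded jb_def]
  have ja1: "ja \<noteq> 0" using fja(1) r by (cases ja) auto
  have jb1: "jb \<noteq> 0" using fjb(1) r by (cases jb) auto
  have Yja: "r/24 \<le> Y one ja"
  proof -
    obtain m where m: "ja = Suc m" using ja1 by (cases ja) auto
    have "r/3 \<le> Y one m" using fja(2)[of m] m by simp
    moreover have "1/8 \<le> l2 (one m)" by (rule l2_ge)
    ultimately have "r/3 * (1/8) \<le> Y one m * l2 (one m)" using r by (intro mult_mono) auto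
    then show ?thesis using m by (simp add: Y_Suc)
  qed
  have Xjb: "r/24 \<le> X one jb"
  proof -
    obtain m where m: "jb = Suc m" using jb1 by (cases jb) auto
    have "r/3 \<le> X one m" using fjb(2)[of m] m by simp
    moreover have "1/8 \<le> l1 (one m)" using l1_ge[of "one m"] by simp
    ultimately have "r/3 * (1/8) \<le> X one m * l1 (one m)" using r by (intro mult_mono) auto
    then show ?thesis using m by (simp add: X_Suc)
  qed
  have "(r / 24) powr D = (r/24) powr s0 * (r/24) powr tt" by (simp add: D_def powr_add)
  also have "\<dots> \<le> X one jb powr s0 * Y one ja powr tt"
    using Xjb Yja r s0_pos tt_pos by (intro mult_mono powr_mono2) auto
  also have "\<dots> = X one jb powr s0 * H one ja" by (simp add: H_one)
  also have "\<dots> = measure PM (Cyl one ja jb)"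
    by (rule cyl_meas[OF one_seqs, symmetric]) (unfold ja_def jb_def, rule ja_le_jb[OF rr3])
  finally show ?thesis unfolding ja_def jb_def .
qed

definition Gn :: "nat \<Rightarrow> (nat \<Rightarrow> nat) set" where "Gn n = {w. \<forall>k\<in>{..<n}. w k \<in> {1, 3}}"

lemma sets_Gn: "Gn n \<in> sets PM" unfolding Gn_def by (rule sets_cyl) simp

lemma Gn_D: "w \<in> Gn n \<Longrightarrow> k < n \<Longrightarrow> w k = 1 \<or> w k = 3"
  unfolding Gn_def by auto

lemma Y_Gn:
  assumes "w \<in> Gn n" "m \<le> n"
  shows "Y w m = mu ^ m"
proof -
  have "Y w m = (\<Prod>k<m. mu)" unfolding Y_def
  proof (intro prod.cong refl)
    fix k assume "k \<in> {..<m}"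
    then have "k < n" using assms(2) by auto
    then have "w k = 1 \<or> w k = 3" by (rule Gn_D[OF assms(1)])
    then show "l2 (w k) = mu" by (auto simp: lam2_ex_def)
  qed
  then show ?thesis by simp
qed

lemma H_Gn:
  assumes w: "w \<in> Gn n"
  shows "H w n = (mu ^ n) powr tt"
proof -
  have "H w n = H one n" unfolding H_def
  proof (intro prod.cong refl)
    fix k assume "k \<in> {..<n}"
    then have "w k = 1 \<or> w k = 3" using Gn_D[OF w] by auto
    then show "hh (w k) = hh (one k)" by (auto simp: hh_def one_def)
  qed
  then show ?thesis by (simp add: H_one Y_one)
qed

lemma lower_count:
  fixes n :: nat
  defines "R \<equiv> 3 * lA ^ n" and "r \<equiv> e * mu ^ n / 3"
  shows "(lA ^ n / 8) powr D \<le> real (cover_num (ball (pt one) R \<inter> F) r) * (mu ^ n) powr D"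
proof -
  have lAn: "0 < lA ^ n" "lA ^ n \<le> 1" using lA_bds by (auto intro: power_le_one)
  have mun: "0 < mu ^ n" "mu ^ n \<le> 1" using mu_bds by (auto intro: power_le_one)
  have R: "0 < R" "R \<le> 3" using lAn by (auto simp: R_def)
  have r: "0 < r" using mun e_pos by (simp add: r_def)
  define N where "N = cover_num (ball (pt one) R \<inter> F) r"
  obtain Cc where Cc: "finite Cc" "card Cc = N" "ball (pt one) R \<inter> F \<subseteq> (\<Union>c\<in>Cc. cball c r)"
    using cover_num_ex[of "ball (pt one) R \<inter> F" r] r unfolding N_def by auto
  define a' where "a' = fb (\<lambda>n. Y one n) (R/3)"
  define b' where "b' = fb (\<lambda>n. X one n) (R/3)"
  have RR3: "0 < R/3" using R by simp
  note fa = fb_props[OF ex_Y1[OF RR3, of one], folded a'_def]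
  note fb' = fb_props[OF ex_X1[OF RR3, of one], folded b'_def]
  have ab: "a' \<le> b'" unfolding a'_def b'_def by (rule ja_le_jb[OF RR3])
  have nb: "n < b'"
  proof -
    have "lA ^ b' < lA ^ n" using fb'(1) by (simp add: X_one R_def)
    then show ?thesis using lA_bds by simp
  qed
  define B where "B c = {w \<in> seqs. pt w \<in> cball c r} \<inter> Gn n" for c
  have setsB: "B c \<in> sets PM" for c
  proof -
    have "B c = (pt -` cball c r \<inter> seqs) \<inter> Gn n" by (auto simp: B_def)
    then show ?thesis using sets_pre[of "cball c r"] sets_seqs sets_Gn by auto
  qed
  have incl: "Cyl one a' b' \<inter> seqs \<subseteq> (\<Union>c\<in>Cc. B c)"
  proof
    fix w assume w: "w \<in> Cyl one a' b' \<inter> seqs"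
    have "dist (pt one) (pt w) \<le> X one b' + Y one a'" using w by (intro cyl_in_ball[OF _ ab]) auto
    then have "dist (pt one) (pt w) < R" using fa(1) fb'(1) R by linarith
    moreover have "pt w \<in> F" using w F_pt by auto
    ultimately obtain c where c: "c \<in> Cc" "pt w \<in> cball c r" using Cc(3) by auto
    have "w \<in> Gn n"
    proof -
      have "w k \<in> {1, 3}" if k: "k < n" for k
      proof -
        have "w k \<in> CS one a' k" using w k nb by (auto simp: Cyl_def)
        then show ?thesis by (auto simp: CS_def colset_def one_def col_def idx_def split: if_splits)
      qed
      then show ?thesis by (simp add: Gn_def)
    qed
    then show "w \<in> (\<Union>c\<in>Cc. B c)" using c w by (auto simp: B_def)
  qed
  have termB: "measure PM (B c) \<le> (mu ^ n) powr D" for c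
  proof (cases "B c = {}")
    case True then show ?thesis by simp
  next
    case False
    then obtain w1 where w1: "w1 \<in> B c" by auto
    have w1s: "w1 \<in> seqs" and w1G: "w1 \<in> Gn n" and w1c: "dist c (pt w1) \<le> r" using w1 by (auto simp: B_def)
    have r3: "0 < 3 * r" using r by simp
    define ia where "ia = fb (\<lambda>m. e * Y w1 m) (3 * r)"
    define ib where "ib = fb (\<lambda>m. e * X w1 m) (3 * r)"
    note fia = fb_props[OF ex_Y[OF r3, of e w1], folded ia_def]
    note fib = fb_props[OF ex_X[OF r3, of e w1], folded ib_def]
    have sub: "B c \<subseteq> Cyl w1 ia ib"
    proof
      fix w assume w: "w \<in> B c"
      have ws: "w \<in> seqs" and wc: "dist c (pt w) \<le> r" using w by (auto simp: B_def)
      have "dist (pt w1) (pt w) \<le> dist (pt w1) c + dist c (pt w)" by (rule dist_triangle)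
      then have "dist (pt w1) (pt w) < 3 * r" using w1c wc r by (simp add: dist_commute)
      then show "w \<in> Cyl w1 ia ib" unfolding ia_def ib_def by (rule ball_in_cyl[OF w1s ws r3])
    qed
    have nia: "n \<le> ia"
    proof (rule ccontr)
      assume "\<not> n \<le> ia"
      then have "Y w1 ia = mu ^ ia" by (intro Y_Gn[OF w1G]) simp
      moreover have "mu ^ n \<le> mu ^ ia" using \<open>\<not> n \<le> ia\<close> mu_bds by (intro power_decreasing) auto
      ultimately have "e * mu ^ n \<le> e * Y w1 ia" using e_pos by simp
      then show False using fia(1) by (simp add: r_def)
    qed
    have "measure PM (B c) \<le> measure PM (Cyl w1 ia ib)" by (rule PMp.finite_measure_mono[OF sub sets_Cyl])
    also have "\<dots> = X w1 ib powr s0 * H w1 ia" by (rule cyl_meas[OF w1s ia_le_ib[OF r3, of w1, folded ia_def ib_def]])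
    also have "\<dots> \<le> (mu ^ n) powr s0 * (mu ^ n) powr tt"
    proof (rule mult_mono)
      have "X w1 ib < mu ^ n" using fib(1) e_pos by (simp add: r_def)
      then show "X w1 ib powr s0 \<le> (mu ^ n) powr s0"
        by (intro powr_mono2 less_imp_le[OF s0_pos] less_imp_le[OF X_pos]) simp
      have "H w1 ia \<le> H w1 n" by (rule H_mono[OF nia])
      then show "H w1 ia \<le> (mu ^ n) powr tt" using H_Gn[OF w1G] by simp
    qed (auto simp: H_pos less_imp_le)
    also have "\<dots> = (mu ^ n) powr D" by (simp add: D_def powr_add)
    finally show ?thesis .
  qed
  have "(lA ^ n / 8) powr D = (R / 24) powr D" by (simp add: R_def)
  also have "\<dots> \<le> measure PM (Cyl one a' b')" unfolding a'_def b'_def by (rule cyl_one_lower[OF R])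
  also have "\<dots> = measure PM (Cyl one a' b' \<inter> seqs)" by (rule measure_restrict_seqs[OF sets_Cyl])
  also have "\<dots> \<le> measure PM (\<Union>c\<in>Cc. B c)"
    by (rule PMp.finite_measure_mono[OF incl]) (use Cc(1) setsB in auto)
  also have "\<dots> \<le> (\<Sum>c\<in>Cc. measure PM (B c))"
    by (rule PMp.finite_measure_subadditive_finite) (use Cc(1) setsB in auto)
  also have "\<dots> \<le> (\<Sum>c\<in>Cc. (mu ^ n) powr D)" by (rule sum_mono) (rule termB)
  also have "\<dots> = real N * (mu ^ n) powr D" using Cc(2) by simp
  finally show ?thesis unfolding N_def .
qed

lemma set_dim: "assouad_dim_set F = ereal D"
  unfolding assouad_dim_set_def
proof (rule Inf_ereal_eqI)
  let ?C = "C0 * C0 * 8 powr D"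
  show "D \<in> {s. 0 \<le> s \<and> (\<exists>C>0. \<forall>x\<in>F. \<forall>r R. 0 < r \<and> r < R \<longrightarrow>
      real (cover_num (ball x R \<inter> F) r) \<le> C * (R / r) powr s)}"
  proof (intro CollectI conjI exI[of _ ?C] ballI allI impI)
    show "0 \<le> D" using D_pos by simp
    show "0 < ?C" using e_pos by simp
    fix x and r R :: real assume "x \<in> F" "0 < r \<and> r < R"
    then show "real (cover_num (ball x R \<inter> F) r) \<le> ?C * (R / r) powr D"
      using cover_upper by auto
  qed
next
  fix s assume "s \<in> {s. 0 \<le> s \<and> (\<exists>C>0. \<forall>x\<in>F. \<forall>r R. 0 < r \<and> r < R \<longrightarrow>
      real (cover_num (ball x R \<inter> F) r) \<le> C * (R / r) powr s)}"
  then obtain C where s: "0 \<le> s" and C: "0 < C" and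
    bd: "\<And>x r R. x \<in> F \<Longrightarrow> 0 < r \<Longrightarrow> r < R \<Longrightarrow>
      real (cover_num (ball x R \<inter> F) r) \<le> C * (R / r) powr s" by blast
  show "D \<le> s"
  proof (rule ccontr)
    assume "\<not> D \<le> s"
    then have Ds: "0 < D - s" by simp
    define B0 where "B0 = C * (9 / e) powr s * 8 powr D"
    have B0: "0 < B0" using C e_pos by (simp add: B0_def)
    define x where "x = lA / mu"
    have x1: "1 < x" using mu_lA mu_bds by (simp add: x_def)
    obtain n where n: "B0 powr (1 / (D - s)) < x ^ n" using real_arch_pow[OF x1] by blast
    define q where "q = x ^ n"
    have q: "0 < q" using x1 by (simp add: q_def)
    have lAq: "lA ^ n = q * mu ^ n" using mu_bds by (simp add: q_def x_def power_divide)
    have mun: "0 < mu ^ n" using mu_bds by simp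
    define R where "R = 3 * lA ^ n"
    define r where "r = e * mu ^ n / 3"
    have r: "0 < r" using e_pos mun by (simp add: r_def)
    have rR: "r < R"
    proof -
      have "mu ^ n \<le> lA ^ n" using mu_lA mu_bds by (intro power_mono) auto
      moreover have "e * mu ^ n < mu ^ n" using e_small mun by simp
      moreover have "0 < lA ^ n" using lA_bds by simp
      ultimately show ?thesis by (simp add: r_def R_def)
    qed
    have x0: "pt one \<in> F" using F_pt one_seqs by auto
    define N where "N = real (cover_num (ball (pt one) R \<inter> F) r)"
    have low: "(lA ^ n / 8) powr D \<le> N * (mu ^ n) powr D"
      unfolding N_def R_def r_def by (rule lower_count)
    have up: "N \<le> C * (R / r) powr s" unfolding N_def by (rule bd[OF x0 r rR])
    have "(lA ^ n / 8) powr D = (q / 8) powr D * (mu ^ n) powr D"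
      unfolding lAq by (simp add: powr_mult[symmetric])
    moreover have "0 < (mu ^ n) powr D" by (subst powr_gt_zero) (use mun in linarith)
    ultimately have "(q / 8) powr D \<le> N" using low by simp
    also have "R / r = (9 / e) * q"
    proof -
      have gen: "\<And>m::real. m \<noteq> 0 \<Longrightarrow> (3 * (q * m)) / (e * m / 3) = (9 / e) * q"
        using e_pos by (simp add: field_simps)
      have mnz: "mu ^ n \<noteq> 0" using less_imp_neq[OF mun] by metis
      show ?thesis unfolding R_def r_def lAq by (rule gen[OF mnz])
    qed
    then have "C * (R / r) powr s = C * (9 / e) powr s * q powr s" by (simp only: powr_mult mult.assoc)
    then have "N \<le> C * (9 / e) powr s * q powr s" using up by (simp only:)
    finally have "(q / 8) powr D \<le> C * (9 / e) powr s * q powr s" .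
    then have "q powr D \<le> B0 * q powr s" using q by (simp add: B0_def powr_divide field_simps)
    then have "q powr D / q powr s \<le> B0" using q by (simp add: divide_le_eq)
    then have le: "q powr (D - s) \<le> B0" by (simp add: powr_diff)
    have "B0 = (B0 powr (1 / (D - s))) powr (D - s)" using B0 Ds by (simp add: powr_powr)
    also have "\<dots> < q powr (D - s)" using n Ds B0 by (intro powr_less_mono2) (auto simp: q_def)
    finally show False using le by simp
  qed
qed

end

theorem proposition4p2:
  shows "\<exists>e0>0. \<forall>e. 0 < e \<and> e < e0 \<longrightarrow>
    (\<exists>a b. a < b \<and> {a<..<b} \<subseteq> {e<..<1} \<and>
      (\<forall>a1\<in>{a<..<b}. \<forall>F :: (real \<times> real) set.
          compact F \<and> F \<noteq> {} \<and> F = (\<Union>i\<in>idx. f_ex a1 e i ` F) \<longrightarrow>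
          assouad_dim_set F = assouad_dim_measure (bernoulli_proj (f_ex a1 e) (q_ex a1 e))))"
proof (rule exI[of _ "1/8"], rule conjI)
  show "(0::real) < 1/8" by simp
  show "\<forall>e. 0 < e \<and> e < 1/8 \<longrightarrow>
    (\<exists>a b. a < b \<and> {a<..<b} \<subseteq> {e<..<1} \<and>
      (\<forall>a1\<in>{a<..<b}. \<forall>F :: (real \<times> real) set.
          compact F \<and> F \<noteq> {} \<and> F = (\<Union>i\<in>idx. f_ex a1 e i ` F) \<longrightarrow>
          assouad_dim_set F = assouad_dim_measure (bernoulli_proj (f_ex a1 e) (q_ex a1 e))))"
  proof (intro allI impI)
  fix e :: real assume e: "0 < e \<and> e < 1/8"
  show "\<exists>a b. a < b \<and> {a<..<b} \<subseteq> {e<..<1} \<and>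
      (\<forall>a1\<in>{a<..<b}. \<forall>F :: (real \<times> real) set.
          compact F \<and> F \<noteq> {} \<and> F = (\<Union>i\<in>idx. f_ex a1 e i ` F) \<longrightarrow>
          assouad_dim_set F = assouad_dim_measure (bernoulli_proj (f_ex a1 e) (q_ex a1 e)))"
  proof -
    have "(1/3::real) < 1/2" by simp
    moreover have "{1/3<..<1/2::real} \<subseteq> {e<..<1}" using e by auto
    moreover have "\<forall>a1\<in>{1/3<..<1/2::real}. \<forall>F :: (real \<times> real) set.
          compact F \<and> F \<noteq> {} \<and> F = (\<Union>i\<in>idx. f_ex a1 e i ` F) \<longrightarrow>
          assouad_dim_set F = assouad_dim_measure (bernoulli_proj (f_ex a1 e) (q_ex a1 e))"
    proof (intro ballI allI impI)
      fix a1 :: real and F :: "(real \<times> real) set"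
      assume a1: "a1 \<in> {1/3<..<1/2}" and F: "compact F \<and> F \<noteq> {} \<and> F = (\<Union>i\<in>idx. f_ex a1 e i ` F)"
      interpret exF a1 e F
        by unfold_locales (use e a1 F in auto)
      show "assouad_dim_set F = assouad_dim_measure (bernoulli_proj (f_ex a1 e) (q_ex a1 e))"
        unfolding nu_eq set_dim measure_dim ..
    qed
    ultimately show ?thesis by blast
  qed
  qed
qed


end
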